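(* Let $A$ be a commutative $\mathbb{F}_p$-algebra and $\delta=(\delta_1,\ldots,\delta_n)$ an $n$-tuple of pairwise commuting derivations of $A$. Let $d_1,\ldots,d_n\in\mathbb{N}\cup\{\infty\}$, $d=(d_1,\ldots,d_n)$, $I=\{\alpha\in\mathbb{N}^n\mid \alpha_i<p^{d_i}\ \forall i\}$. Suppose there are elements $y_{ik}\in A$ ($i=1,\ldots,n$; $k\in\mathbb{N}$, $k<d_i$) with $y_{ik}^p=0$, $\delta_i^{p^k}(y_{ik})=1$, and $\delta_j(y_{ik})=0$ for all $j\neq i$. For each $i$ let $\{x_i^{[j]}\mid 0\le j<p^{d_i}\}$ be the sequence obtained by the construction described in the context from the derivation $\delta_i$ and the elements $y_{i0},y_{i1},\ldots$. Then: (1) The family $\{x^{[\alpha]}:=x_1^{[\alpha_1]}\cdots x_n^{[\alpha_n]}\mid\alpha\in I\}$ is an iterative $\delta$-descent of exponent $d$. (2) Let $x'=\{x'^{[\alpha]}\mid\alpha\in I\}$ be any iterative $\delta$-descent of exponent $d$ in $A$. For each $i$, let $N_i=\{a\in A\mid \delta_i^{p^{d_i}}(a)=0\}$ (if $d_i=\infty$: the set of $a$ with $\delta_i^m(a)=0$ for some $m$) and $\mathfrak{m}_i=\bigoplus_{1\le j<p^{d_i}}A^{\delta_i}x'^{[je_i]}$, so that $N_i=A^{\delta_i}\oplus\mathfrak{m}_i$. For an iterative $\delta$-descent $y$ of exponent $d$, let $\lambda_{ij}(y)$ be the $A^{\delta_i}$-component of $y^{[p^je_i]}\in N_i$ ($0\le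 j<d_i$). Then $r_d:y\mapsto(\lambda_{ij}(y))_{i,j}$ is a bijection from the set of all iterative $\delta$-descents of exponent $d$ in $A$ onto $C(\delta,d)=\prod_{i=1}^n\{(\lambda_0,\lambda_1,\ldots,\lambda_{d_i-1})\mid \lambda_j\in A^\delta,\ \lambda_j^p=0\}$. (3) If in addition the ring $A^\delta=\bigcap_i\ker\delta_i$ is reduced, then the iterative $\delta$-descent in (1) is the only iterative $\delta$-descent of exponent $d$ in $A$.
   Context: For $\alpha\in\mathbb{N}^n$, $\delta^\alpha=\delta_1^{\alpha_1}\cdots\delta_n^{\alpha_n}$, $e_i$ the standard basis vectors, $A^{\delta_i}=\ker\delta_i$. A family $\{y^{[\alpha]}\mid\alpha\in I\}$ in $A$ is a $\delta$-descent if $y^{[0]}=1$ and $\delta^\alpha(y^{[\beta]})=y^{[\beta-\alpha]}$ for all $\alpha\in\mathbb{N}^n$, $\beta\in I$, where $y^{[\gamma]}:=0$ for $\gamma\notin\mathbb{N}^n$. It is iterative if $y^{[\alpha]}y^{[\beta]}=\binom{\alpha+\beta}{\beta}y^{[\alpha+\beta]}$ for all $\alpha,\beta\in I$, with $\binom{\alpha+\beta}{\beta}=\prod_i\binom{\alpha_i+\beta_i}{\beta_i}\in\mathbb{F}_p$ (the right side being $0$ when $\alpha+\beta\notin I$, in which case the coefficient vanishes mod $p$). An iterative $\delta$-descent indexed by $I$ has exponent $d$. Construction (for a derivation $\partial$ of $A$ and $y_0,\ldots,y_{e-1}$ with $y_k^p=0$, $\partial^{p^k}(y_k)=1$): $x^{[0]}=1$,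 $x^{[1]}=y_0$, $x^{[p]}=(-1)^{p-1}\phi_0(y_1)$ where $\phi_0(z)=\sum_{j=0}^{p-1}(-1)^j\frac{(x^{[1]})^j}{j!}\partial^j(z)$; recursively for $1\le k\le e-2$ (all $k\ge1$ if $e=\infty$), $x^{[p^{k+1}]}=(-1)^{p-1}\partial^{p^k-1}\Big(\prod_{l=0}^{k-1}\frac{(x^{[p^l]})^{p-1}}{(p-1)!}\cdot\phi_k(y_{k+1})\Big)$ with $\phi_k(z)=\sum_{j=0}^{p-1}(-1)^j\frac{(x^{[p^k]})^j}{j!}\partial^{p^kj}(z)$; and for $i=\sum_k i_kp^k$ ($0\le i_k<p$), $i<p^e$, $x^{[i]}=\prod_k\frac{(x^{[p^k]})^{i_k}}{i_k!}$. *)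

theory Defs
  imports Main "HOL-Computational_Algebra.Primes" "HOL-Library.Extended_Nat" "HOL-Library.FuncSet"
begin

text \<open>Indices i of the derivations run over 0..<n (the paper uses 1..n).
  Multi-indices alpha in N^n are functions nat => nat vanishing outside {..<n}.\<close>

definition is_derivation :: "('a::comm_ring_1 \<Rightarrow> 'a) \<Rightarrow> bool" where
  "is_derivation D \<longleftrightarrow> (\<forall>a b. D (a + b) = D a + D b) \<and> (\<forall>a b. D (a * b) = a * D b + b * D a)"

definition below_ppow :: "nat \<Rightarrow> enat \<Rightarrow> nat \<Rightarrow> bool" where
  "below_ppow p e a \<longleftrightarrow> (case e of enat m \<Rightarrow> a < p ^ m | \<infinity> \<Rightarrow> True)"

definition natn :: "nat \<Rightarrow> (nat \<Rightarrow> nat) set" where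
  "natn n = {\<alpha>. \<forall>i. n \<le> i \<longrightarrow> \<alpha> i = 0}"

definition idx_set :: "nat \<Rightarrow> nat \<Rightarrow> (nat \<Rightarrow> enat) \<Rightarrow> (nat \<Rightarrow> nat) set" where
  "idx_set p n d = {\<alpha> \<in> natn n. \<forall>i<n. below_ppow p (d i) (\<alpha> i)}"

primrec dpow :: "(nat \<Rightarrow> 'a \<Rightarrow> 'a) \<Rightarrow> nat \<Rightarrow> (nat \<Rightarrow> nat) \<Rightarrow> 'a \<Rightarrow> 'a" where
  "dpow \<delta> 0 \<alpha> = id"
| "dpow \<delta> (Suc n) \<alpha> = dpow \<delta> n \<alpha> \<circ> (\<delta> n ^^ \<alpha> n)"

definition mvec :: "nat \<Rightarrow> nat \<Rightarrow> nat \<Rightarrow> nat" where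
  "mvec i j = (\<lambda>l. if l = i then j else 0)"

definition mbinom :: "nat \<Rightarrow> (nat \<Rightarrow> nat) \<Rightarrow> (nat \<Rightarrow> nat) \<Rightarrow> nat" where
  "mbinom n \<alpha> \<beta> = (\<Prod>i<n. (\<alpha> i + \<beta> i) choose (\<beta> i))"

definition is_descent :: "nat \<Rightarrow> nat \<Rightarrow> (nat \<Rightarrow> 'a::comm_ring_1 \<Rightarrow> 'a) \<Rightarrow> (nat \<Rightarrow> enat)
    \<Rightarrow> ((nat \<Rightarrow> nat) \<Rightarrow> 'a) \<Rightarrow> bool" where
  "is_descent p n \<delta> d y \<longleftrightarrow> y (\<lambda>_. 0) = 1 \<and>
     (\<forall>\<alpha>\<in>natn n. \<forall>\<beta>\<in>idx_set p n d.
        dpow \<delta> n \<alpha> (y \<beta>) = (if (\<forall>i. \<alpha> i \<le> \<beta> i) then y (\<lambda>i. \<beta> i - \<alpha> i) else 0))"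

definition is_iterative :: "nat \<Rightarrow> nat \<Rightarrow> (nat \<Rightarrow> enat) \<Rightarrow> ((nat \<Rightarrow> nat) \<Rightarrow> 'a::comm_ring_1) \<Rightarrow> bool" where
  "is_iterative p n d y \<longleftrightarrow>
     (\<forall>\<alpha>\<in>idx_set p n d. \<forall>\<beta>\<in>idx_set p n d.
        y \<alpha> * y \<beta> = (if (\<lambda>i. \<alpha> i + \<beta> i) \<in> idx_set p n d
                       then of_nat (mbinom n \<alpha> \<beta>) * y (\<lambda>i. \<alpha> i + \<beta> i) else 0))"

text \<open>The set of all iterative delta-descents of exponent d (families indexed by I,
  represented as extensional functions on I).\<close>
definition iter_descents :: "nat \<Rightarrow> nat \<Rightarrow> (nat \<Rightarrow> 'a::comm_ring_1 \<Rightarrow> 'a) \<Rightarrow> (nat \<Rightarrow> enat)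
    \<Rightarrow> ((nat \<Rightarrow> nat) \<Rightarrow> 'a) set" where
  "iter_descents p n \<delta> d = {y \<in> extensional (idx_set p n d).
      is_descent p n \<delta> d y \<and> is_iterative p n d y}"

text \<open>Inverse in F_p of a natural number m not divisible by p (used for 1/j!).\<close>
definition fp_inv :: "nat \<Rightarrow> nat \<Rightarrow> 'a::comm_ring_1" where
  "fp_inv p m = of_nat (SOME k. (k * m) mod p = 1 mod p)"

text \<open>Table of x^[p^0], ..., x^[p^k] of the construction.\<close>
primrec xtab :: "nat \<Rightarrow> ('a::comm_ring_1 \<Rightarrow> 'a) \<Rightarrow> (nat \<Rightarrow> 'a) \<Rightarrow> nat \<Rightarrow> nat \<Rightarrow> 'a" where
  "xtab p D y 0 = (\<lambda>_. 0)(0 := y 0)"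
| "xtab p D y (Suc k) = (let f = xtab p D y k in
     f(Suc k := (-1) ^ (p - 1) * (D ^^ (p ^ k - 1))
        ((\<Prod>l<k. f l ^ (p - 1) * fp_inv p (fact (p - 1))) *
         (\<Sum>j<p. (-1) ^ j * f k ^ j * fp_inv p (fact j) * (D ^^ (p ^ k * j)) (y (Suc k))))))"

definition xpp :: "nat \<Rightarrow> ('a::comm_ring_1 \<Rightarrow> 'a) \<Rightarrow> (nat \<Rightarrow> 'a) \<Rightarrow> nat \<Rightarrow> 'a" where
  "xpp p D y k = xtab p D y k k"

text \<open>x^[i] = prod_k (x^[p^k])^(i_k) / i_k!, i = sum_k i_k p^k (digits i_k = 0 for k > i).\<close>
definition xseq :: "nat \<Rightarrow> ('a::comm_ring_1 \<Rightarrow> 'a) \<Rightarrow> (nat \<Rightarrow> 'a) \<Rightarrow> nat \<Rightarrow> 'a" where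
  "xseq p D y i = (\<Prod>k\<le>i. xpp p D y k ^ (i div p ^ k mod p) * fp_inv p (fact (i div p ^ k mod p)))"

definition kerD :: "('a::comm_ring_1 \<Rightarrow> 'a) \<Rightarrow> 'a set" where
  "kerD D = {a. D a = 0}"

definition Adelta :: "nat \<Rightarrow> (nat \<Rightarrow> 'a::comm_ring_1 \<Rightarrow> 'a) \<Rightarrow> 'a set" where
  "Adelta n \<delta> = {a. \<forall>i<n. \<delta> i a = 0}"

definition Nset :: "nat \<Rightarrow> ('a::comm_ring_1 \<Rightarrow> 'a) \<Rightarrow> enat \<Rightarrow> 'a set" where
  "Nset p D e = {a. case e of enat m \<Rightarrow> (D ^^ (p ^ m)) a = 0 | \<infinity> \<Rightarrow> (\<exists>m. (D ^^ m) a = 0)}"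

definition jset :: "nat \<Rightarrow> enat \<Rightarrow> nat set" where
  "jset p e = {j. 1 \<le> j \<and> below_ppow p e j}"

definition mset :: "nat \<Rightarrow> ('a::comm_ring_1 \<Rightarrow> 'a) \<Rightarrow> enat \<Rightarrow> ((nat \<Rightarrow> nat) \<Rightarrow> 'a) \<Rightarrow> nat \<Rightarrow> 'a set" where
  "mset p D e x' i = {(\<Sum>j\<in>J. c j * x' (mvec i j)) | J c.
      finite J \<and> J \<subseteq> jset p e \<and> (\<forall>j\<in>J. c j \<in> kerD D)}"

definition lam :: "nat \<Rightarrow> (nat \<Rightarrow> 'a::comm_ring_1 \<Rightarrow> 'a) \<Rightarrow> (nat \<Rightarrow> enat) \<Rightarrow> ((nat \<Rightarrow> nat) \<Rightarrow> 'a)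
    \<Rightarrow> nat \<Rightarrow> nat \<Rightarrow> ((nat \<Rightarrow> nat) \<Rightarrow> 'a) \<Rightarrow> 'a" where
  "lam p \<delta> d x' i j y = (THE c. c \<in> kerD (\<delta> i) \<and> y (mvec i (p ^ j)) - c \<in> mset p (\<delta> i) (d i) x' i)"

definition Kset :: "nat \<Rightarrow> (nat \<Rightarrow> enat) \<Rightarrow> (nat \<times> nat) set" where
  "Kset n d = {(i, j). i < n \<and> enat j < d i}"

definition rmap :: "nat \<Rightarrow> nat \<Rightarrow> (nat \<Rightarrow> 'a::comm_ring_1 \<Rightarrow> 'a) \<Rightarrow> (nat \<Rightarrow> enat) \<Rightarrow> ((nat \<Rightarrow> nat) \<Rightarrow> 'a)
    \<Rightarrow> ((nat \<Rightarrow> nat) \<Rightarrow> 'a) \<Rightarrow> (nat \<times> nat \<Rightarrow> 'a)" where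
  "rmap p n \<delta> d x' y = restrict (\<lambda>(i, j). lam p \<delta> d x' i j y) (Kset n d)"

definition Cset :: "nat \<Rightarrow> nat \<Rightarrow> (nat \<Rightarrow> 'a::comm_ring_1 \<Rightarrow> 'a) \<Rightarrow> (nat \<Rightarrow> enat) \<Rightarrow> (nat \<times> nat \<Rightarrow> 'a) set" where
  "Cset p n \<delta> d = {c \<in> extensional (Kset n d).
      \<forall>ij\<in>Kset n d. c ij \<in> Adelta n \<delta> \<and> c ij ^ p = 0}"

end

theory Submission
  imports Defs "HOL-Number_Theory.Cong"
begin

lemma ofnat_mod_char:
  assumes "of_nat p = (0::'a::comm_ring_1)"
  shows "(of_nat (a mod p) :: 'a) = of_nat a"
proof -
  have "a = a mod p + p * (a div p)" by simp
  hence "(of_nat a::'a) = of_nat (a mod p) + of_nat p * of_nat (a div p)"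
    by (metis of_nat_add of_nat_mult)
  thus ?thesis using assms by simp
qed

lemma cong_ofnat_char:
  assumes "of_nat p = (0::'a::comm_ring_1)" "[a = b] (mod p)"
  shows "(of_nat a :: 'a) = of_nat b"
  using assms ofnat_mod_char[OF assms(1), of a] ofnat_mod_char[OF assms(1), of b]
  unfolding cong_def by metis

lemma choose_add_p_cong:
  assumes "prime p"
  shows "[(n + p) choose m = (n choose m) + (if p \<le> m then n choose (m - p) else 0)] (mod p)"
proof -
  have "(n + p) choose m = (\<Sum>k\<le>m. (p choose k) * (n choose (m - k)))"
    using vandermonde[of p n m] by (simp add: add.commute)
  also have "[\<dots> = (\<Sum>k\<le>m. (if k = 0 then n choose m else if k = p then n choose (m - p) else 0))] (mod p)"
  proof (rule cong_sum)
    fix k assume "k \<in> {..m}"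
    show "[(p choose k) * (n choose (m - k)) = (if k = 0 then n choose m else if k = p then n choose (m - p) else 0)] (mod p)"
    proof (cases "k = 0 \<or> k = p \<or> p < k")
      case True thus ?thesis by (auto simp: binomial_eq_0)
    next
      case False
      hence "p dvd (p choose k)" using assms by (intro dvd_choose_prime) (auto simp: prime_gt_0_nat)
      thus ?thesis using False by (auto simp: cong_0_iff)
    qed
  qed
  also have "(\<Sum>k\<le>m. (if k = 0 then n choose m else if k = p then n choose (m - p) else 0)) =
     (n choose m) + (if p \<le> m then n choose (m - p) else 0)"
  proof -
    have p0: "p \<noteq> 0" using assms by auto
    have "(\<Sum>k\<le>m. (if k = 0 then n choose m else if k = p then n choose (m - p) else 0)) =
      (\<Sum>k\<le>m. (if k = 0 then n choose m else 0)) + (\<Sum>k\<le>m. (if k = p then n choose (m - p) else 0))"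
      using p0 by (subst sum.distrib[symmetric]) (rule sum.cong, auto)
    also have "\<dots> = (n choose m) + (if p \<le> m then n choose (m - p) else 0)"
      by (simp add: sum.delta)
    finally show ?thesis .
  qed
  finally show ?thesis .
qed

lemma lucas_p:
  assumes "prime p" "r < p" "s < p"
  shows "[(r + p * c) choose (s + p * d) = (r choose s) * (c choose d)] (mod p)"
proof (induction c arbitrary: d)
  case 0
  show ?case
  proof (cases d)
    case 0 thus ?thesis by simp
  next
    case (Suc d')
    hence "r < s + p * d" using assms by (simp add: add.commute trans_less_add1)
    thus ?thesis using Suc by (simp add: binomial_eq_0)
  qed
next
  case (Suc c)
  have "[(r + p * Suc c) choose (s + p * d) = ((r + p * c) choose (s + p * d)) +
      (if p \<le> s + p * d then (r + p * c) choose (s + p * d - p) else 0)] (mod p)"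
    using choose_add_p_cong[OF assms(1), of "r + p * c" "s + p * d"]
    by (simp add: add.assoc mult_Suc_right add.commute[of p])
  moreover have "[((r + p * c) choose (s + p * d)) +
      (if p \<le> s + p * d then (r + p * c) choose (s + p * d - p) else 0) =
      (r choose s) * (c choose d) + (if d \<noteq> 0 then (r choose s) * (c choose (d - 1)) else 0)] (mod p)"
  proof (cases d)
    case 0
    hence "\<not> p \<le> s + p * d" using assms by simp
    thus ?thesis using Suc.IH[of d] 0 by simp
  next
    case (Suc d')
    hence "p \<le> s + p * d" "s + p * d - p = s + p * d'" by auto
    thus ?thesis using Suc.IH[of d] Suc.IH[of d'] Suc by (auto intro: cong_add)
  qed
  moreover have "(r choose s) * (c choose d) + (if d \<noteq> 0 then (r choose s) * (c choose (d - 1)) else 0)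
     = (r choose s) * (Suc c choose d)"
    by (cases d) (auto simp: algebra_simps)
  ultimately show ?case by (metis cong_trans)
qed

lemma lucas_pk:
  assumes "prime p" "r < p ^ k" "s < p ^ k"
  shows "[(r + p ^ k * c) choose (s + p ^ k * d) = (r choose s) * (c choose d)] (mod p)"
  using assms(2,3)
proof (induction k arbitrary: r s)
  case 0 thus ?case by simp
next
  case (Suc k)
  have p0: "p > 0" using assms(1) prime_gt_0_nat by blast
  define r0 r1 s0 s1 where "r0 = r mod p" "r1 = r div p" "s0 = s mod p" "s1 = s div p"
  have r: "r = r0 + p * r1" and s: "s = s0 + p * s1" unfolding r0_r1_s0_s1_def by simp_all
  have r0: "r0 < p" and s0: "s0 < p" unfolding r0_r1_s0_s1_def using p0 by simp_all
  have r1: "r1 < p ^ k" unfolding r0_r1_s0_s1_def using Suc.prems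
    by (simp add: div_less_iff_less_mult mult.commute p0)
  have s1: "s1 < p ^ k" unfolding r0_r1_s0_s1_def using Suc.prems
    by (simp add: div_less_iff_less_mult mult.commute p0)
  have e1: "r + p ^ Suc k * c = r0 + p * (r1 + p ^ k * c)" using r by (simp add: algebra_simps)
  have e2: "s + p ^ Suc k * d = s0 + p * (s1 + p ^ k * d)" using s by (simp add: algebra_simps)
  have "[(r + p ^ Suc k * c) choose (s + p ^ Suc k * d) = (r0 choose s0) * ((r1 + p ^ k * c) choose (s1 + p ^ k * d))] (mod p)"
    unfolding e1 e2 by (rule lucas_p[OF assms(1) r0 s0])
  moreover have "[(r0 choose s0) * ((r1 + p ^ k * c) choose (s1 + p ^ k * d)) = (r0 choose s0) * ((r1 choose s1) * (c choose d))] (mod p)"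
    by (intro cong_mult cong_refl Suc.IH r1 s1)
  moreover have "[(r choose s) = (r0 choose s0) * (r1 choose s1)] (mod p)"
    unfolding r s by (rule lucas_p[OF assms(1) r0 s0])
  ultimately show ?case
    by (metis (no_types, lifting) cong_scalar_right cong_sym cong_trans mult.assoc)
qed

lemma prime_dvd_choose_small:
  assumes "prime p" "c < p" "d < p" "p \<le> c + d"
  shows "p dvd ((c + d) choose c)"
proof -
  have "fact (c + d) = fact c * fact d * ((c + d) choose c)"
    using binomial_fact_lemma[of c "c + d"] by simp
  moreover have "p dvd fact (c + d)" using assms prime_dvd_fact_iff by blast
  moreover have "\<not> p dvd fact c * fact d"
    using assms by (simp add: prime_dvd_mult_iff prime_dvd_fact_iff)
  ultimately show ?thesis using assms(1) by (metis prime_dvd_mult_iff)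
qed

lemma choose_overflow:
  assumes "prime p" "a < p ^ K" "b < p ^ K" "p ^ K \<le> a + b"
  shows "p dvd ((a + b) choose a)"
proof (cases K)
  case 0 thus ?thesis using assms by simp
next
  case (Suc k)
  have p0: "p > 0" using assms(1) prime_gt_0_nat by blast
  define P where "P = p ^ k"
  have P0: "P > 0" unfolding P_def using p0 by simp
  define r c s d where "r = a mod P" "c = a div P" "s = b mod P" "d = b div P"
  have a: "a = r + P * c" and b: "b = s + P * d" unfolding r_c_s_d_def by simp_all
  have rP: "r < P" "s < P" unfolding r_c_s_d_def using P0 by simp_all
  have cp: "c < p" "d < p" unfolding r_c_s_d_def P_def using assms(2,3) Suc
    by (simp_all add: div_less_iff_less_mult p0 mult.commute)
  show ?thesis
  proof (cases "P \<le> r + s")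
    case True
    have e: "a + b = (r + s - P) + P * (c + d + 1)" using a b True by (simp add: algebra_simps)
    have "[(a + b) choose a = ((r + s - P) choose r) * ((c + d + 1) choose c)] (mod p)"
      unfolding e unfolding a P_def by (rule lucas_pk[OF assms(1)]) (use rP True P_def in auto)
    moreover have "(r + s - P) choose r = 0" using rP True by (simp add: binomial_eq_0)
    ultimately show ?thesis by (simp add: cong_0_iff)
  next
    case False
    have e: "a + b = (r + s) + P * (c + d)" using a b by (simp add: algebra_simps)
    have "[(a + b) choose a = ((r + s) choose r) * ((c + d) choose c)] (mod p)"
      unfolding e unfolding a P_def by (rule lucas_pk[OF assms(1)]) (use rP False P_def in auto)
    moreover have "p \<le> c + d"
    proof (rule ccontr)
      assume "\<not> p \<le> c + d"
      hence "c + d + 1 \<le> p" by simp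
      hence "P * (c + d + 1) \<le> P * p" by (rule mult_le_mono2)
      moreover have "a + b < P * (c + d + 1)" using e False by simp
      ultimately show False using assms(4) Suc P_def by (simp add: mult.commute)
    qed
    hence "p dvd ((c + d) choose c)" using prime_dvd_choose_small[OF assms(1) cp] by simp
    ultimately show ?thesis by (metis cong_dvd_iff dvd_mult)
  qed
qed

lemma choose_pj_dvd:
  assumes "prime p" "j \<ge> 1"
  shows "p dvd ((p * j) choose j)"
  using assms(2)
proof (induction j rule: less_induct)
  case (less j)
  have p0: "p > 0" using assms(1) prime_gt_0_nat by blast
  define j0 j1 where "j0 = j mod p" "j1 = j div p"
  have j: "j = j0 + p * j1" unfolding j0_j1_def by simp
  have "[(0 + p * j) choose (j0 + p * j1) = (0 choose j0) * (j choose j1)] (mod p)"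
    by (rule lucas_p[OF assms(1)]) (use p0 j0_j1_def in auto)
  hence c: "[(p * j) choose j = (0 choose j0) * (j choose j1)] (mod p)" using j by simp
  show ?case
  proof (cases "j0 = 0")
    case False thus ?thesis using c by (simp add: cong_0_iff binomial_eq_0)
  next
    case True
    hence jj: "j = p * j1" using j by simp
    hence "j1 \<ge> 1" "j1 < j" using less.prems prime_gt_1_nat[OF assms(1)] by auto
    hence "p dvd ((p * j1) choose j1)" using less.IH by blast
    thus ?thesis using c jj by (metis cong_dvd_iff dvd_mult)
  qed
qed

lemma choose_qP_P:
  assumes "prime p"
  shows "[(p ^ v * q) choose (p ^ v) = q] (mod p)"
proof -
  have "[(0 + p ^ v * q) choose (0 + p ^ v * 1) = (0 choose 0) * (q choose 1)] (mod p)"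
    by (rule lucas_pk[OF assms]) (use assms prime_gt_0_nat in auto)
  thus ?thesis by simp
qed

lemma fp_inv_mult:
  assumes "prime p" "of_nat p = (0::'a::comm_ring_1)" "\<not> p dvd m"
  shows "(fp_inv p m :: 'a) * of_nat m = 1"
proof -
  have "coprime m p" using assms by (metis coprime_commute prime_imp_coprime_nat)
  then obtain k where k: "[m * k = 1] (mod p)" using cong_solve_coprime_nat by (metis One_nat_def)
  have "\<exists>k. (k * m) mod p = 1 mod p" using k unfolding cong_def by (metis mult.commute)
  hence "((SOME k. (k * m) mod p = 1 mod p) * m) mod p = 1 mod p" by (rule someI_ex)
  hence "[(SOME k. (k * m) mod p = 1 mod p) * m = 1] (mod p)" unfolding cong_def .
  hence "(of_nat ((SOME k. (k * m) mod p = 1 mod p) * m) :: 'a) = of_nat 1"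
    by (rule cong_ofnat_char[OF assms(2)])
  thus ?thesis unfolding fp_inv_def by simp
qed

lemma fp_inv_fact:
  assumes "prime p" "of_nat p = (0::'a::comm_ring_1)" "j < p"
  shows "(fp_inv p (fact j) :: 'a) * of_nat (fact j) = 1"
proof -
  have "\<not> p dvd fact j" using assms by (simp add: prime_dvd_fact_iff)
  from fp_inv_mult[OF assms(1,2) this] show ?thesis .
qed

lemma pascal_sum_step:
  fixes A B :: "nat \<Rightarrow> 'a::comm_ring_1"
  shows "(\<Sum>k\<le>n. of_nat (n choose k) * A (k+1) * B (n-k)) +
      (\<Sum>k\<le>n. of_nat (n choose k) * A k * B (n - k + 1)) =
    (\<Sum>k\<le>n+1. of_nat (n + 1 choose k) * A k * B (n + 1 - k))"
proof -
  have decomp: "{0..n+1} = {0} \<union> {n + 1} \<union> {1..n}"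
    by auto
  have "(\<Sum>k\<le>n. of_nat (n choose k) * A (k+1) * B (n-k)) +
      (\<Sum>k\<le>n. of_nat (n choose k) * A k * B (n - k + 1)) =
      (\<Sum>k\<le>n. of_nat (n choose k) * A k * B (n + 1 - k)) +
      (\<Sum>k=1..n+1. of_nat (n choose (k - 1)) * A k * B (n + 1 - k))"
    by (simp add: atMost_atLeast0 sum.shift_bounds_cl_Suc_ivl Suc_diff_le field_simps del: sum.cl_ivl_Suc)
  also have "\<dots> = A 0 * B (n + 1) +
      (\<Sum>k=1..n. of_nat (n choose k) * A k * B (n + 1 - k)) + (A (n + 1) * B 0 +
      (\<Sum>k=1..n. of_nat (n choose (k - 1)) * A k * B (n + 1 - k)))"
      using sum.nat_ivl_Suc' [of 1 n "\<lambda>k. of_nat (n choose (k-1)) * A k * B (n + 1 - k)"]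
    by (simp add: sum.atLeast_Suc_atMost atMost_atLeast0)
  also have "\<dots> = A (n + 1) * B 0 + A 0 * B (n + 1) +
      (\<Sum>k=1..n. of_nat (n + 1 choose k) * A k * B (n + 1 - k))"
    by (auto simp add: field_simps sum.distrib [symmetric] choose_reduce_nat)
  also have "\<dots> = (\<Sum>k\<le>n+1. of_nat (n + 1 choose k) * A k * B (n + 1 - k))"
    using decomp by (simp add: atMost_atLeast0 field_simps)
  finally show ?thesis .
qed

lemma der_add: "is_derivation D \<Longrightarrow> D (a + b) = D a + D b"
  unfolding is_derivation_def by blast
lemma der_mult: "is_derivation D \<Longrightarrow> D (a * b) = a * D b + b * D a"
  unfolding is_derivation_def by blast
lemma der_0: "is_derivation D \<Longrightarrow> D 0 = 0"
  using der_add[of D 0 0] by simp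
lemma der_minus: "is_derivation D \<Longrightarrow> D (- a) = - D a"
  using der_add[of D a "-a"] der_0[of D] by (simp add: eq_neg_iff_add_eq_0 add.commute)
lemma der_diff: "is_derivation D \<Longrightarrow> D (a - b) = D a - D b"
  using der_add[of D a "-b"] der_minus[of D b] by simp
lemma der_1: "is_derivation D \<Longrightarrow> D 1 = 0"
  using der_mult[of D 1 1] by simp
lemma der_of_nat: "is_derivation D \<Longrightarrow> D (of_nat k) = 0"
  by (induction k) (simp_all add: der_0 der_add der_1)
lemma der_sum: "is_derivation D \<Longrightarrow> D (\<Sum>x\<in>S. f x) = (\<Sum>x\<in>S. D (f x))"
  by (induction S rule: infinite_finite_induct) (simp_all add: der_0 der_add)
lemma der_power: "is_derivation D \<Longrightarrow> D (a ^ Suc n) = of_nat (Suc n) * a ^ n * D a"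
proof (induction n)
  case 0 thus ?case by (simp add: der_mult der_1)
next
  case (Suc n)
  have "D (a ^ Suc (Suc n)) = D (a * a ^ Suc n)" by simp
  also have "\<dots> = a * D (a ^ Suc n) + a ^ Suc n * D a" by (simp add: der_mult[OF Suc.prems])
  also have "\<dots> = of_nat (Suc (Suc n)) * a ^ Suc n * D a" using Suc by (simp add: algebra_simps)
  finally show ?case .
qed
lemma der_power': "is_derivation D \<Longrightarrow> D (a ^ n) = of_nat n * a ^ (n - 1) * D a"
  using der_power[of D a "n - 1"] by (cases n) (simp_all add: der_1)
lemma der_const_mult: "is_derivation D \<Longrightarrow> D c = 0 \<Longrightarrow> D (c * a) = c * D a"
  by (simp add: der_mult)
lemma der_neg1_pow: "is_derivation D \<Longrightarrow> D ((-1) ^ k) = 0"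
  by (induction k) (simp_all add: der_mult der_minus der_1)

lemma derpow_add: "is_derivation D \<Longrightarrow> (D ^^ m) (a + b) = (D ^^ m) a + (D ^^ m) b"
  by (induction m) (simp_all add: der_add)
lemma derpow_0: "is_derivation D \<Longrightarrow> (D ^^ m) 0 = 0"
  by (induction m) (simp_all add: der_0)
lemma derpow_minus: "is_derivation D \<Longrightarrow> (D ^^ m) (- a) = - (D ^^ m) a"
  by (induction m) (simp_all add: der_minus)
lemma derpow_diff: "is_derivation D \<Longrightarrow> (D ^^ m) (a - b) = (D ^^ m) a - (D ^^ m) b"
  by (induction m) (simp_all add: der_diff)
lemma derpow_sum: "is_derivation D \<Longrightarrow> (D ^^ m) (\<Sum>x\<in>S. f x) = (\<Sum>x\<in>S. (D ^^ m) (f x))"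
  by (induction m) (simp_all add: der_sum)
lemma derpow_const_mult: "is_derivation D \<Longrightarrow> D c = 0 \<Longrightarrow> (D ^^ m) (c * a) = c * (D ^^ m) a"
  by (induction m) (simp_all add: der_const_mult)

lemma leibniz:
  assumes D: "is_derivation D"
  shows "(D ^^ n) (a * b) = (\<Sum>k\<le>n. of_nat (n choose k) * (D ^^ k) a * (D ^^ (n - k)) b)"
proof (induction n)
  case 0 thus ?case by simp
next
  case (Suc n)
  have "(D ^^ Suc n) (a * b) = D (\<Sum>k\<le>n. of_nat (n choose k) * (D ^^ k) a * (D ^^ (n - k)) b)"
    using Suc by simp
  also have "\<dots> = (\<Sum>k\<le>n. of_nat (n choose k) * (D ^^ (k + 1)) a * (D ^^ (n - k)) b) +
      (\<Sum>k\<le>n. of_nat (n choose k) * (D ^^ k) a * (D ^^ (n - k + 1)) b)"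
    by (simp add: der_sum[OF D] sum.distrib[symmetric] der_mult[OF D] der_of_nat[OF D] algebra_simps)
  also have "\<dots> = (\<Sum>k\<le>n+1. of_nat (n + 1 choose k) * (D ^^ k) a * (D ^^ (n + 1 - k)) b)"
    by (rule pascal_sum_step[of n "\<lambda>k. (D ^^ k) a" "\<lambda>k. (D ^^ k) b"])
  finally show ?case by simp
qed

lemma sum_two_pts:
  assumes "(p::nat) > 0"
  shows "(\<Sum>k\<le>p. (if k = 0 then X else if k = p then Y else 0)) = (X + Y :: 'a::comm_monoid_add)"
proof -
  have "(\<Sum>k\<le>p. (if k = 0 then X else if k = p then Y else 0)) =
      (\<Sum>k\<le>p. (if k = 0 then X else 0)) + (\<Sum>k\<le>p. (if k = p then Y else 0))"
    using assms by (subst sum.distrib[symmetric]) (rule sum.cong, auto)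
  also have "\<dots> = X + Y" by (simp add: sum.delta)
  finally show ?thesis .
qed

lemma frob_add:
  assumes "prime p" "of_nat p = (0::'a::comm_ring_1)"
  shows "(a + b :: 'a) ^ p = a ^ p + b ^ p"
proof -
  have p0: "p > 0" using prime_gt_0_nat[OF assms(1)] .
  have "(a + b) ^ p = (\<Sum>k\<le>p. of_nat (p choose k) * a ^ k * b ^ (p - k))"
    by (rule binomial_ring)
  also have "\<dots> = (\<Sum>k\<le>p. (if k = 0 then b ^ p else if k = p then a ^ p else 0))"
  proof (rule sum.cong)
    fix k assume k: "k \<in> {..p}"
    show "of_nat (p choose k) * a ^ k * b ^ (p - k) = (if k = 0 then b ^ p else if k = p then a ^ p else 0)"
    proof (cases "k = 0 \<or> k = p")
      case True thus ?thesis using p0 by auto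
    next
      case False
      hence "p dvd (p choose k)" using assms k by (intro dvd_choose_prime) auto
      hence "[p choose k = 0] (mod p)" by (simp add: cong_0_iff)
      hence "(of_nat (p choose k)::'a) = of_nat 0" by (rule cong_ofnat_char[OF assms(2)])
      thus ?thesis using False by simp
    qed
  qed simp
  also have "\<dots> = a ^ p + b ^ p"
    using sum_two_pts[OF p0, of "b ^ p" "a ^ p"] by (simp add: add.commute)
  finally show ?thesis .
qed

lemma frob_sum:
  assumes "prime p" "of_nat p = (0::'a::comm_ring_1)"
  shows "(\<Sum>x\<in>S. f x :: 'a) ^ p = (\<Sum>x\<in>S. f x ^ p)"
proof (induction S rule: infinite_finite_induct)
  case (infinite A) thus ?case using assms prime_gt_0_nat by (simp add: zero_power)
next
  case empty thus ?case using assms prime_gt_0_nat by (simp add: zero_power)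
next
  case (insert x F) thus ?case by (simp add: frob_add[OF assms])
qed

lemma char2_one:
  assumes "of_nat p = (0::'a::comm_ring_1)" "p = 2"
  shows "(1::'a) = -1"
proof -
  have "(1::'a) + 1 = of_nat (Suc (Suc 0))" by simp
  also have "\<dots> = of_nat p" using assms(2) by simp
  finally have "(1::'a) + 1 = 0" using assms(1) by simp
  thus ?thesis by (simp only: eq_neg_iff_add_eq_0)
qed

lemma neg1_pow_p:
  assumes "prime p" "of_nat p = (0::'a::comm_ring_1)"
  shows "((-1)::'a) ^ p = -1"
proof (cases "p = 2")
  case True
  have o: "(1::'a) = -1" by (rule char2_one[OF assms(2) True])
  have "((-1)::'a) ^ p = (-1) ^ 2" using True by simp
  also have "\<dots> = 1" by simp
  finally show ?thesis using o by (rule trans)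
next
  case False
  have "p > 2" using False prime_ge_2_nat[OF assms(1)] by simp
  hence "odd p" by (rule prime_odd_nat[OF assms(1)])
  thus ?thesis by simp
qed

lemma frob_neg1:
  assumes "prime p" "of_nat p = (0::'a::comm_ring_1)"
  shows "((-1) ^ k :: 'a) ^ p = (-1) ^ k"
proof -
  have "((-1) ^ k :: 'a) ^ p = ((-1) ^ p) ^ k"
    by (simp only: power_mult[symmetric] mult.commute)
  thus ?thesis using neg1_pow_p[OF assms] by simp
qed

lemma neg1_pow_pminus1:
  assumes "prime p" "of_nat p = (0::'a::comm_ring_1)"
  shows "((-1) ^ (p - 1) :: 'a) = 1"
proof (cases "p = 2")
  case True
  have o: "(1::'a) = -1" by (rule char2_one[OF assms(2) True])
  have "((-1)::'a) ^ (p - 1) = -1" using True by simp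
  thus ?thesis using o[symmetric] by (rule trans)
next
  case False
  have "p > 2" using False prime_ge_2_nat[OF assms(1)] by simp
  hence "odd p" by (rule prime_odd_nat[OF assms(1)])
  hence "even (p - 1)" using assms prime_gt_0_nat by simp
  thus ?thesis by simp
qed

lemma derpow_p_derivation:
  assumes "prime p" "of_nat p = (0::'a::comm_ring_1)" and D: "is_derivation (D :: 'a \<Rightarrow> 'a)"
  shows "is_derivation (D ^^ p)"
proof -
  have p0: "p > 0" using prime_gt_0_nat[OF assms(1)] .
  have "(D ^^ p) (a * b) = a * (D ^^ p) b + b * (D ^^ p) a" for a b
  proof -
    have "(D ^^ p) (a * b) = (\<Sum>k\<le>p. of_nat (p choose k) * (D ^^ k) a * (D ^^ (p - k)) b)"
      by (rule leibniz[OF D])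
    also have "\<dots> = (\<Sum>k\<le>p. (if k = 0 then a * (D ^^ p) b else if k = p then b * (D ^^ p) a else 0))"
    proof (rule sum.cong)
      fix k assume k: "k \<in> {..p}"
      show "of_nat (p choose k) * (D ^^ k) a * (D ^^ (p - k)) b = (if k = 0 then a * (D ^^ p) b else if k = p then b * (D ^^ p) a else 0)"
      proof (cases "k = 0 \<or> k = p")
        case True thus ?thesis using p0 by (auto simp: mult.commute)
      next
        case False
        hence "p dvd (p choose k)" using assms k by (intro dvd_choose_prime) auto
        hence "[p choose k = 0] (mod p)" by (simp add: cong_0_iff)
        hence "(of_nat (p choose k)::'a) = of_nat 0" by (rule cong_ofnat_char[OF assms(2)])
        thus ?thesis using False by simp
      qed
    qed simp
    also have "\<dots> = a * (D ^^ p) b + b * (D ^^ p) a"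
      by (rule sum_two_pts[OF p0])
    finally show ?thesis .
  qed
  moreover have "(D ^^ p) (a + b) = (D ^^ p) a + (D ^^ p) b" for a b by (rule derpow_add[OF D])
  ultimately show ?thesis unfolding is_derivation_def by blast
qed

lemma derpow_ppow_derivation:
  assumes "prime p" "of_nat p = (0::'a::comm_ring_1)" and D: "is_derivation (D :: 'a \<Rightarrow> 'a)"
  shows "is_derivation (D ^^ (p ^ k))"
proof (induction k)
  case 0 thus ?case using D by simp
next
  case (Suc k)
  have "D ^^ (p ^ Suc k) = (D ^^ (p ^ k)) ^^ p" by (simp add: funpow_mult mult.commute)
  thus ?case using derpow_p_derivation[OF assms(1,2) Suc] by simp
qed

lemma comm_funpow:
  assumes "f \<circ> g = g \<circ> f"
  shows "f ((g ^^ m) x) = (g ^^ m) (f x)"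
proof (induction m)
  case 0 thus ?case by simp
next
  case (Suc m)
  have "f ((g ^^ Suc m) x) = f (g ((g ^^ m) x))" by simp
  also have "\<dots> = g (f ((g ^^ m) x))" using fun_cong[OF assms, of "(g ^^ m) x"] by simp
  also have "\<dots> = (g ^^ Suc m) (f x)" using Suc by simp
  finally show ?case .
qed

definition fac :: "nat \<Rightarrow> (nat \<Rightarrow> 'a::comm_ring_1) \<Rightarrow> nat \<Rightarrow> nat \<Rightarrow> 'a" where
  "fac p u i k = u k ^ (i div p ^ k mod p) * fp_inv p (fact (i div p ^ k mod p))"

definition dpr :: "nat \<Rightarrow> nat \<Rightarrow> (nat \<Rightarrow> 'a::comm_ring_1) \<Rightarrow> nat \<Rightarrow> 'a" where
  "dpr p K u i = (\<Prod>k<K. fac p u i k)"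

definition dprod :: "nat \<Rightarrow> (nat \<Rightarrow> 'a::comm_ring_1) \<Rightarrow> nat \<Rightarrow> 'a" where
  "dprod p u i = (\<Prod>k\<le>i. fac p u i k)"

lemma xseq_dprod: "xseq p D y = dprod p (xpp p D y)"
  unfolding xseq_def dprod_def fac_def by (rule ext) simp

definition iter_below :: "nat \<Rightarrow> nat \<Rightarrow> (nat \<Rightarrow> 'a::comm_ring_1) \<Rightarrow> bool" where
  "iter_below p K X \<longleftrightarrow> (\<forall>a b. a < p ^ K \<longrightarrow> b < p ^ K \<longrightarrow>
     X a * X b = (if a + b < p ^ K then of_nat ((a + b) choose a) * X (a + b) else 0))"

definition iter1 :: "nat \<Rightarrow> enat \<Rightarrow> (nat \<Rightarrow> 'a::comm_ring_1) \<Rightarrow> bool" where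
  "iter1 p e X \<longleftrightarrow> (\<forall>a b. below_ppow p e a \<longrightarrow> below_ppow p e b \<longrightarrow>
     X a * X b = (if below_ppow p e (a + b) then of_nat ((a + b) choose a) * X (a + b) else 0))"

context
  fixes p :: nat
  assumes prime: "prime p" and char: "of_nat p = (0::'a::comm_ring_1)"
begin

lemma p_gt0: "p > 0" using prime_gt_0_nat[OF prime] .
lemma p_gt1: "p > 1" using prime_gt_1_nat[OF prime] .

lemma fp_inv_1: "(fp_inv p 1 :: 'a) = 1"
proof -
  have "\<not> p dvd 1" using p_gt1 by simp
  from fp_inv_mult[OF prime char this] show ?thesis by simp
qed

lemma fac_zero: "i div p ^ k mod p = 0 \<Longrightarrow> fac p (u :: nat \<Rightarrow> 'a) i k = 1"
  unfolding fac_def using fp_inv_1 by simp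

lemma dpr_mono_eq:
  assumes "i < p ^ K" "K \<le> M"
  shows "dpr p M (u :: nat \<Rightarrow> 'a) i = dpr p K u i"
proof -
  have "dpr p M u i = (\<Prod>k\<in>{..<K} \<union> {K..<M}. fac p u i k)"
    unfolding dpr_def using assms(2) by (intro prod.cong) auto
  also have "\<dots> = dpr p K u i * (\<Prod>k\<in>{K..<M}. fac p u i k)"
    unfolding dpr_def by (subst prod.union_disjoint) auto
  also have "(\<Prod>k\<in>{K..<M}. fac p u i k) = 1"
  proof (rule prod.neutral, rule ballI)
    fix k assume "k \<in> {K..<M}"
    hence "p ^ K \<le> p ^ k" using p_gt0 by (simp add: power_increasing)
    hence "i div p ^ k = 0" using assms(1) by simp
    thus "fac p u i k = 1" by (intro fac_zero) simp
  qed
  finally show ?thesis by simp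
qed

lemma lt_ppow_self: "i < p ^ i"
proof -
  have "i < 2 ^ i" by (rule less_exp)
  also have "(2::nat) ^ i \<le> p ^ i" using p_gt1 by (simp add: power_mono)
  finally show ?thesis .
qed

lemma dprod_eq_dpr:
  assumes "i < p ^ K"
  shows "dprod p (u :: nat \<Rightarrow> 'a) i = dpr p K u i"
proof -
  have "dprod p u i = dpr p (Suc i) u i"
    unfolding dprod_def dpr_def using lessThan_Suc_atMost by simp
  also have "\<dots> = dpr p (max K (Suc i)) u i"
  proof (rule dpr_mono_eq[symmetric])
    have "i < p ^ Suc i" using lt_ppow_self[of "Suc i"] by simp
    thus "i < p ^ Suc i" .
  qed simp
  also have "\<dots> = dpr p K u i"
    by (rule dpr_mono_eq[OF assms]) simp
  finally show ?thesis .
qed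

lemma dpr_0: "dpr p K (u :: nat \<Rightarrow> 'a) 0 = 1"
  unfolding dpr_def by (intro prod.neutral ballI fac_zero) simp

lemma digit_mod:
  assumes "k < K"
  shows "(i mod p ^ K) div p ^ k mod p = i div p ^ k mod p"
proof -
  have "p ^ K = p ^ k * p ^ (K - k)" using assms by (simp add: power_add[symmetric])
  hence "i mod p ^ K = p ^ k * (i div p ^ k mod p ^ (K - k)) + i mod p ^ k"
    by (simp add: mod_mult2_eq)
  hence "(i mod p ^ K) div p ^ k = (i div p ^ k) mod p ^ (K - k)"
    using p_gt0 by simp
  moreover have "p dvd p ^ (K - k)" using assms by simp
  ultimately show ?thesis by (simp add: mod_mod_cancel)
qed

lemma dpr_Suc:
  assumes "i < p ^ Suc K"
  shows "dpr p (Suc K) (u :: nat \<Rightarrow> 'a) i =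
    dpr p K u (i mod p ^ K) * (u K ^ (i div p ^ K) * fp_inv p (fact (i div p ^ K)))"
proof -
  have d: "i div p ^ K < p" using assms p_gt0 by (simp add: div_less_iff_less_mult mult.commute)
  have "dpr p K u i = dpr p K u (i mod p ^ K)"
    unfolding dpr_def fac_def by (intro prod.cong refl) (simp add: digit_mod)
  thus ?thesis unfolding dpr_def using d by (simp add: fac_def)
qed

lemma W_mult:
  assumes w: "(w::'a) ^ p = 0" and cd: "c < p" "d < p"
  shows "(w ^ c * fp_inv p (fact c)) * (w ^ d * fp_inv p (fact d)) =
    (if c + d < p then of_nat ((c + d) choose c) * (w ^ (c + d) * fp_inv p (fact (c + d))) else 0)"
proof (cases "c + d < p")
  case False
  hence "p \<le> c + d" by simp
  hence "w ^ (c + d) = w ^ p * w ^ (c + d - p)" by (simp add: power_add[symmetric])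
  hence wcd: "w ^ c * w ^ d = 0" using w by (simp add: power_add)
  have "(w ^ c * fp_inv p (fact c)) * (w ^ d * fp_inv p (fact d)) = (w ^ c * w ^ d) * (fp_inv p (fact c) * fp_inv p (fact d))"
    by (simp only: ac_simps)
  thus ?thesis using False wcd by simp
next
  case True
  have f: "(fp_inv p (fact (c + d)) :: 'a) * of_nat (fact (c + d)) = 1" by (rule fp_inv_fact[OF prime char True])
  have fc: "(fp_inv p (fact c) :: 'a) * of_nat (fact c) = 1" by (rule fp_inv_fact[OF prime char cd(1)])
  have fd: "(fp_inv p (fact d) :: 'a) * of_nat (fact d) = 1" by (rule fp_inv_fact[OF prime char cd(2)])
  have fl: "fact c * fact d * ((c + d) choose c) = fact (c + d)"
    using binomial_fact_lemma[of c "c + d"] by simp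
  have "(fp_inv p (fact c) :: 'a) * fp_inv p (fact d) =
      fp_inv p (fact c) * fp_inv p (fact d) * (of_nat (fact (c + d)) * fp_inv p (fact (c + d)))"
    using f by (simp add: mult.commute)
  also have "\<dots> = (fp_inv p (fact c) * of_nat (fact c)) * (fp_inv p (fact d) * of_nat (fact d)) *
      of_nat ((c + d) choose c) * fp_inv p (fact (c + d))"
    by (simp add: fl[symmetric] algebra_simps)
  also have "\<dots> = of_nat ((c + d) choose c) * fp_inv p (fact (c + d))"
    using fc fd by simp
  finally have e: "(fp_inv p (fact c) :: 'a) * fp_inv p (fact d) = of_nat ((c + d) choose c) * fp_inv p (fact (c + d))" .
  have "(w ^ c * fp_inv p (fact c)) * (w ^ d * fp_inv p (fact d)) = w ^ (c + d) * (fp_inv p (fact c) * fp_inv p (fact d))"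
    by (simp add: power_add algebra_simps)
  also have "\<dots> = of_nat ((c + d) choose c) * (w ^ (c + d) * fp_inv p (fact (c + d)))"
    by (simp add: e algebra_simps)
  finally show ?thesis using True by simp
qed

lemma ofnat_choose_zero: "p dvd n \<Longrightarrow> (of_nat n :: 'a) = 0"
  using cong_ofnat_char[OF char, of n 0] by (simp add: cong_0_iff)

lemma extend_iter:
  assumes X: "iter_below p K (X :: nat \<Rightarrow> 'a)" and w: "w ^ p = 0"
  shows "iter_below p (Suc K) (\<lambda>i. X (i mod p ^ K) * (w ^ (i div p ^ K) * fp_inv p (fact (i div p ^ K))))"
  unfolding iter_below_def
proof (intro allI impI)
  fix a b :: nat
  assume a: "a < p ^ Suc K" and b: "b < p ^ Suc K"
  define P where "P = p ^ K"
  have P0: "P > 0" unfolding P_def using p_gt0 by simp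
  define r c s d where "r = a mod P" "c = a div P" "s = b mod P" "d = b div P"
  have ar: "a = r + P * c" and bs: "b = s + P * d" unfolding r_c_s_d_def by simp_all
  have rP: "r < P" "s < P" unfolding r_c_s_d_def using P0 by simp_all
  have cp: "c < p" "d < p" unfolding r_c_s_d_def P_def using a b p_gt0
    by (simp_all add: div_less_iff_less_mult mult.commute)
  define W where "W = (\<lambda>c. w ^ c * fp_inv p (fact c))"
  have Ya: "a mod p ^ K = r" "a div p ^ K = c" "b mod p ^ K = s" "b div p ^ K = d"
    unfolding r_c_s_d_def P_def by simp_all
  have XX: "X r * X s = (if r + s < P then of_nat ((r + s) choose r) * X (r + s) else 0)"
    using X rP unfolding iter_below_def P_def by blast
  have WW: "W c * W d = (if c + d < p then of_nat ((c + d) choose c) * W (c + d) else 0)"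
    unfolding W_def by (rule W_mult[OF w cp])
  have pP: "p ^ Suc K = P * p" unfolding P_def by simp
  have lhs: "X (a mod p ^ K) * W (a div p ^ K) * (X (b mod p ^ K) * W (b div p ^ K)) =
     (X r * X s) * (W c * W d)" unfolding Ya by (simp add: algebra_simps)
  show "X (a mod p ^ K) * (w ^ (a div p ^ K) * fp_inv p (fact (a div p ^ K))) *
       (X (b mod p ^ K) * (w ^ (b div p ^ K) * fp_inv p (fact (b div p ^ K)))) =
       (if a + b < p ^ Suc K
        then of_nat ((a + b) choose a) * (X ((a + b) mod p ^ K) * (w ^ ((a + b) div p ^ K) * fp_inv p (fact ((a + b) div p ^ K))))
        else 0)"
    (is "?L = ?R")
  proof -
    have L: "?L = (X r * X s) * (W c * W d)" using lhs unfolding W_def by simp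
    show ?thesis
    proof (cases "r + s < P")
      case rs: True
      have e: "a + b = (r + s) + P * (c + d)" using ar bs by (simp add: algebra_simps)
      have em: "(a + b) mod p ^ K = r + s" "(a + b) div p ^ K = c + d"
        unfolding e P_def[symmetric] using rs by simp_all
      show ?thesis
      proof (cases "c + d < p")
        case cd: True
        have lt: "a + b < p ^ Suc K"
        proof -
          have "c + d + 1 \<le> p" using cd by simp
          hence "P * (c + d + 1) \<le> P * p" by (rule mult_le_mono2)
          moreover have "a + b < P * (c + d + 1)" using e rs by (simp add: algebra_simps)
          ultimately show ?thesis using pP by linarith
        qed
        have "[(r + s + P * (c + d)) choose (r + P * c) = ((r + s) choose r) * ((c + d) choose c)] (mod p)"
          unfolding P_def by (rule lucas_pk[OF prime]) (use rs rP P_def in auto)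
        hence "(of_nat ((a + b) choose a) :: 'a) = of_nat ((r + s) choose r) * of_nat ((c + d) choose c)"
          using cong_ofnat_char[OF char] e ar by (metis of_nat_mult)
        hence ch: "(of_nat ((a + b) choose a) :: 'a) = of_nat ((r + s) choose r) * of_nat ((c + d) choose c)" .
        have "?L = (of_nat ((r + s) choose r) * X (r + s)) * (of_nat ((c + d) choose c) * W (c + d))"
          using L XX WW rs cd by simp
        also have "\<dots> = (of_nat ((r + s) choose r) * of_nat ((c + d) choose c)) * (X (r + s) * W (c + d))"
          by (simp only: ac_simps)
        also have "\<dots> = ?R" using lt em ch unfolding W_def by simp
        finally show ?thesis .
      next
        case cd: False
        have nlt: "\<not> a + b < p ^ Suc K"
        proof -
          have "P * p \<le> P * (c + d)" using cd by (intro mult_le_mono2) simp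
          moreover have "P * (c + d) \<le> a + b" using e by simp
          ultimately show ?thesis using pP by linarith
        qed
        thus ?thesis using L WW cd by simp
      qed
    next
      case rs: False
      have L0: "?L = 0" using L XX rs by simp
      show ?thesis
      proof (cases "a + b < p ^ Suc K")
        case False thus ?thesis using L0 by simp
      next
        case True
        have e: "a + b = (r + s - P) + P * (c + d + 1)" using ar bs rs by (simp add: algebra_simps)
        have "[(r + s - P + P * (c + d + 1)) choose (r + P * c) = ((r + s - P) choose r) * ((c + d + 1) choose c)] (mod p)"
          unfolding P_def by (rule lucas_pk[OF prime]) (use rs rP P_def in auto)
        moreover have "(r + s - P) choose r = 0" using rP rs by (simp add: binomial_eq_0)
        ultimately have "p dvd ((a + b) choose a)" using e ar by (simp add: cong_0_iff)
        hence "(of_nat ((a + b) choose a) :: 'a) = 0" by (rule ofnat_choose_zero)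
        thus ?thesis using L0 by simp
      qed
    qed
  qed
qed

lemma dpr_iter:
  assumes "\<forall>k<K. (u k :: 'a) ^ p = 0"
  shows "iter_below p K (dpr p K u)"
  using assms
proof (induction K)
  case 0
  show ?case unfolding iter_below_def dpr_def by simp
next
  case (Suc K)
  have I: "iter_below p K (dpr p K u)" using Suc by simp
  have w: "u K ^ p = 0" using Suc.prems by simp
  have "iter_below p (Suc K) (\<lambda>i. dpr p K u (i mod p ^ K) * (u K ^ (i div p ^ K) * fp_inv p (fact (i div p ^ K))))"
    by (rule extend_iter[OF I w])
  thus ?case unfolding iter_below_def using dpr_Suc by simp
qed

lemma iter1_dprod:
  assumes "\<forall>k. enat k < e \<longrightarrow> (u k :: 'a) ^ p = 0"
  shows "iter1 p e (dprod p u)"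
  unfolding iter1_def
proof (intro allI impI)
  fix a b assume a: "below_ppow p e a" and b: "below_ppow p e b"
  show "dprod p u a * dprod p u b = (if below_ppow p e (a + b) then of_nat ((a + b) choose a) * dprod p u (a + b) else 0)"
  proof (cases e)
    case (enat m)
    have am: "a < p ^ m" "b < p ^ m" using a b enat by (simp_all add: below_ppow_def)
    have I: "iter_below p m (dpr p m u)" using assms enat by (intro dpr_iter) simp
    have "dpr p m u a * dpr p m u b = (if a + b < p ^ m then of_nat ((a + b) choose a) * dpr p m u (a + b) else 0)"
      using I am unfolding iter_below_def by blast
    thus ?thesis using am enat dprod_eq_dpr by (simp add: below_ppow_def)
  next
    case infinity
    define m where "m = a + b"
    have am: "a < p ^ m" "b < p ^ m" "a + b < p ^ m" unfolding m_def using lt_ppow_self[of "a+b"] by simp_all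
    have I: "iter_below p m (dpr p m u)" using assms infinity by (intro dpr_iter) simp
    have "dpr p m u a * dpr p m u b = (if a + b < p ^ m then of_nat ((a + b) choose a) * dpr p m u (a + b) else 0)"
      using I am unfolding iter_below_def by blast
    thus ?thesis using am infinity dprod_eq_dpr[of a m u] dprod_eq_dpr[of b m u] dprod_eq_dpr[of "a+b" m u]
      by (simp add: below_ppow_def)
  qed
qed

lemma below_mono: "below_ppow p e a \<Longrightarrow> b \<le> a \<Longrightarrow> below_ppow p e b"
  unfolding below_ppow_def by (cases e) auto

lemma iter1_pow_p:
  assumes X: "iter1 p e (X :: nat \<Rightarrow> 'a)" and j: "j \<ge> 1" "below_ppow p e j"
  shows "X j ^ p = 0"
proof -
  have pw: "\<exists>c. X j ^ Suc t = c * (if below_ppow p e (Suc t * j) then X (Suc t * j) else 0)" for t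
  proof (induction t)
    case 0 thus ?case by (intro exI[of _ 1]) (use j in simp)
  next
    case (Suc t)
    then obtain c where c: "X j ^ Suc t = c * (if below_ppow p e (Suc t * j) then X (Suc t * j) else 0)" by blast
    show ?case
    proof (cases "below_ppow p e (Suc t * j)")
      case False
      hence "\<not> below_ppow p e (Suc (Suc t) * j)" using below_mono by fastforce
      thus ?thesis using c False by (intro exI[of _ 0]) simp
    next
      case True
      have "X j ^ Suc (Suc t) = c * (X (Suc t * j) * X j)" using c True by (simp add: algebra_simps)
      also have "X (Suc t * j) * X j = (if below_ppow p e (Suc (Suc t) * j) then of_nat ((Suc (Suc t) * j) choose (Suc t * j)) * X (Suc (Suc t) * j) else 0)"
      proof -
        have eq: "Suc t * j + j = Suc (Suc t) * j" by simp
        have "X (Suc t * j) * X j = (if below_ppow p e (Suc t * j + j) then of_nat ((Suc t * j + j) choose (Suc t * j)) * X (Suc t * j + j) else 0)"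
          using X True j unfolding iter1_def by blast
        thus ?thesis by (simp only: eq)
      qed
      finally show ?thesis by (intro exI[of _ "c * of_nat ((Suc (Suc t) * j) choose (Suc t * j))"]) (auto simp: algebra_simps)
    qed
  qed
  obtain c where c: "X j ^ Suc (p - 2) = c * (if below_ppow p e (Suc (p - 2) * j) then X (Suc (p - 2) * j) else 0)"
    using pw by blast
  have p2: "Suc (p - 2) = p - 1" "Suc (p - 1) = p" using p_gt1 by simp_all
  show ?thesis
  proof (cases "below_ppow p e ((p - 1) * j)")
    case False
    hence "X j ^ (p - 1) = 0" using c p2 by simp
    thus ?thesis using p2 by (metis mult_zero_left power_Suc2)
  next
    case True
    have "X j ^ p = X j ^ (p - 1) * X j" using p2 by (metis power_Suc2)
    also have "\<dots> = c * (X ((p - 1) * j) * X j)" using c p2 True by (simp add: algebra_simps)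
    also have "X ((p - 1) * j) * X j = (if below_ppow p e (p * j) then of_nat ((p * j) choose ((p - 1) * j)) * X (p * j) else 0)"
    proof -
      have eq: "(p - 1) * j + j = p * j" using p_gt1 by (simp add: algebra_simps)
      have "X ((p - 1) * j) * X j = (if below_ppow p e ((p - 1) * j + j) then of_nat (((p - 1) * j + j) choose ((p - 1) * j)) * X ((p - 1) * j + j) else 0)"
        using X True j unfolding iter1_def by blast
      thus ?thesis by (simp only: eq)
    qed
    also have "(of_nat ((p * j) choose ((p - 1) * j)) :: 'a) = 0"
    proof -
      have "(p - 1) * j \<le> p * j" by simp
      hence "(p * j) choose ((p - 1) * j) = (p * j) choose (p * j - (p - 1) * j)" by (rule binomial_symmetric)
      also have "p * j - (p - 1) * j = j" using p_gt1 by (simp add: diff_mult_distrib)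
      finally have "(p * j) choose ((p - 1) * j) = (p * j) choose j" .
      moreover have "p dvd ((p * j) choose j)" by (rule choose_pj_dvd[OF prime j(1)])
      ultimately show ?thesis using ofnat_choose_zero by simp
    qed
    finally show ?thesis by simp
  qed
qed

lemma below_overflow_dvd:
  assumes "below_ppow p e a" "below_ppow p e b" "\<not> below_ppow p e (a + b)"
  shows "p dvd ((a + b) choose a)"
proof (cases e)
  case (enat m)
  thus ?thesis using assms choose_overflow[OF prime, of a m b] by (simp add: below_ppow_def)
next
  case infinity thus ?thesis using assms by (simp add: below_ppow_def)
qed

end

lemma xtab_stable: "l \<le> k \<Longrightarrow> xtab p D y k l = xpp p D y l"
proof (induction k arbitrary: l)
  case 0 thus ?case by (simp add: xpp_def)
next
  case (Suc k)
  show ?case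
  proof (cases "l = Suc k")
    case True thus ?thesis by (simp add: xpp_def)
  next
    case False
    hence "l \<le> k" using Suc.prems by simp
    thus ?thesis using False Suc.IH by (simp add: Let_def)
  qed
qed

lemma xpp_0: "xpp p D y 0 = y 0"
  by (simp add: xpp_def)

lemma xpp_Suc: "xpp p D y (Suc k) = (-1) ^ (p - 1) * (D ^^ (p ^ k - 1))
   ((\<Prod>l<k. xpp p D y l ^ (p - 1) * fp_inv p (fact (p - 1))) *
    (\<Sum>j<p. (-1) ^ j * xpp p D y k ^ j * fp_inv p (fact j) * (D ^^ (p ^ k * j)) (y (Suc k))))"
proof -
  have "xpp p D y (Suc k) = xtab p D y (Suc k) (Suc k)" by (simp only: xpp_def)
  also have "\<dots> = (-1) ^ (p - 1) * (D ^^ (p ^ k - 1))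
   ((\<Prod>l<k. xtab p D y k l ^ (p - 1) * fp_inv p (fact (p - 1))) *
    (\<Sum>j<p. (-1) ^ j * xtab p D y k k ^ j * fp_inv p (fact j) * (D ^^ (p ^ k * j)) (y (Suc k))))"
    by (simp add: Let_def)
  also have "\<dots> = (-1) ^ (p - 1) * (D ^^ (p ^ k - 1))
   ((\<Prod>l<k. xpp p D y l ^ (p - 1) * fp_inv p (fact (p - 1))) *
    (\<Sum>j<p. (-1) ^ j * xpp p D y k ^ j * fp_inv p (fact j) * (D ^^ (p ^ k * j)) (y (Suc k))))"
    by (simp add: xtab_stable)
  finally show ?thesis .
qed

definition desc_below :: "nat \<Rightarrow> ('a::comm_ring_1 \<Rightarrow> 'a) \<Rightarrow> nat \<Rightarrow> (nat \<Rightarrow> 'a) \<Rightarrow> bool" where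
  "desc_below p D K X \<longleftrightarrow> X 0 = 1 \<and> (\<forall>i. 1 \<le> i \<longrightarrow> i < p ^ K \<longrightarrow> D (X i) = X (i - 1))"

lemma desc_pow:
  assumes D: "is_derivation D" and X: "desc_below p D K X" and i: "i < p ^ K"
  shows "(D ^^ m) (X i) = (if m \<le> i then X (i - m) else 0)"
proof (induction m)
  case 0 thus ?case by simp
next
  case (Suc m)
  show ?case
  proof (cases "m \<le> i")
    case False thus ?thesis using Suc by (simp add: der_0[OF D])
  next
    case True
    show ?thesis
    proof (cases "m = i")
      case True
      thus ?thesis using Suc X by (simp add: desc_below_def der_1[OF D])
    next
      case False
      hence "1 \<le> i - m" "i - m < p ^ K" using True i by auto
      hence "D (X (i - m)) = X (i - m - 1)" using X unfolding desc_below_def by blast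
      thus ?thesis using Suc True False by simp
    qed
  qed
qed

lemma divmod_decomp:
  assumes "r < (P::nat)"
  shows "(r + P * c) mod P = r" "(r + P * c) div P = c"
  using assms by simp_all

lemma iter_below_iter1: "iter_below p K X = iter1 p (enat K) X"
  unfolding iter_below_def iter1_def below_ppow_def by simp

context
  fixes p :: nat and D :: "'a::comm_ring_1 \<Rightarrow> 'a"
  assumes prime: "prime p" and char: "of_nat p = (0::'a)" and der: "is_derivation D"
begin

lemma der_fp_inv: "D (fp_inv p m) = 0"
  unfolding fp_inv_def by (rule der_of_nat[OF der])

lemma ofnat_fpinv_fact:
  assumes "1 \<le> c" "c < p"
  shows "(of_nat c :: 'a) * fp_inv p (fact c) = fp_inv p (fact (c - 1))"
proof -
  have f1: "(fp_inv p (fact (c - 1)) :: 'a) * of_nat (fact (c - 1)) = 1"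
    by (rule fp_inv_fact[OF prime char]) (use assms in simp)
  have f2: "(fp_inv p (fact c) :: 'a) * of_nat (fact c) = 1"
    by (rule fp_inv_fact[OF prime char assms(2)])
  have fc: "fact c = c * fact (c - 1)" using assms by (simp add: fact_reduce)
  have "(of_nat c :: 'a) * fp_inv p (fact c) = (of_nat c * fp_inv p (fact c)) * (of_nat (fact (c - 1)) * fp_inv p (fact (c - 1)))"
    using f1 by (simp add: mult.commute)
  also have "\<dots> = (fp_inv p (fact c) * of_nat (fact c)) * fp_inv p (fact (c - 1))"
    by (simp add: fc ac_simps)
  also have "\<dots> = fp_inv p (fact (c - 1))" using f2 by simp
  finally show ?thesis .
qed

lemma extend_desc:
  assumes X: "desc_below p D K X" and XI: "iter_below p K X" and w: "D w = X (p ^ K - 1)"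
  shows "desc_below p D (Suc K) (\<lambda>i. X (i mod p ^ K) * (w ^ (i div p ^ K) * fp_inv p (fact (i div p ^ K))))"
  unfolding desc_below_def
proof (intro conjI allI impI)
  show "X (0 mod p ^ K) * (w ^ (0 div p ^ K) * fp_inv p (fact (0 div p ^ K))) = 1"
    using X fp_inv_1[OF prime char] by (simp add: desc_below_def)
next
  fix i assume i1: "1 \<le> i" and i2: "i < p ^ Suc K"
  define P where "P = p ^ K"
  have P0: "P > 0" unfolding P_def using p_gt0[OF prime char] by simp
  define r c where "r = i mod P" "c = i div P"
  have ir: "i = r + P * c" unfolding r_c_def by simp
  have rP: "r < P" unfolding r_c_def using P0 by simp
  have cp: "c < p" unfolding r_c_def P_def using i2 p_gt0[OF prime char]
    by (simp add: div_less_iff_less_mult mult.commute)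
  define W where "W = (\<lambda>c. w ^ c * fp_inv p (fact c))"
  have DW: "D (W c) = (if c = 0 then 0 else W (c - 1) * X (P - 1))"
  proof (cases "c = 0")
    case True thus ?thesis unfolding W_def by (simp add: der_mult[OF der] der_fp_inv der_1[OF der])
  next
    case False
    have "D (W c) = fp_inv p (fact c) * (of_nat c * w ^ (c - 1) * D w)"
      unfolding W_def by (simp add: der_mult[OF der] der_fp_inv der_power'[OF der])
    also have "\<dots> = (of_nat c * fp_inv p (fact c)) * w ^ (c - 1) * X (P - 1)"
      using w P_def by (simp add: ac_simps)
    also have "\<dots> = W (c - 1) * X (P - 1)"
      using ofnat_fpinv_fact[of c] False cp unfolding W_def by (simp add: ac_simps)
    finally show ?thesis using False by simp
  qed
  have goal: "D (X r * W c) = X ((i - 1) mod P) * W ((i - 1) div P)"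
  proof (cases "r = 0")
    case False
    have DX: "D (X r) = X (r - 1)" using X False rP unfolding desc_below_def P_def by simp
    have XX: "X r * X (P - 1) = 0"
    proof -
      have "P - 1 < P" using P0 by simp
      hence "X r * X (P - 1) = (if r + (P - 1) < P then of_nat ((r + (P - 1)) choose r) * X (r + (P - 1)) else 0)"
        using XI rP unfolding iter_below_def P_def by blast
      moreover have "\<not> r + (P - 1) < P" using False by simp
      ultimately show ?thesis by simp
    qed
    have im: "(i - 1) mod P = r - 1" "(i - 1) div P = c"
    proof -
      have "i - 1 = (r - 1) + P * c" using ir False by simp
      moreover have "r - 1 < P" using rP by simp
      ultimately show "(i - 1) mod P = r - 1" "(i - 1) div P = c" by simp_all
    qed
    have "D (X r * W c) = X r * D (W c) + W c * D (X r)" by (rule der_mult[OF der])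
    also have "X r * D (W c) = 0"
    proof (cases "c = 0")
      case True thus ?thesis using DW by simp
    next
      case False
      have "X r * D (W c) = (X r * X (P - 1)) * W (c - 1)" using DW False by (simp only: ac_simps if_False)
      thus ?thesis using XX by simp
    qed
    finally show ?thesis using DX im by (simp add: mult.commute)
  next
    case True
    hence c0: "c \<noteq> 0" using ir i1 by auto
    have X0: "X 0 = 1" using X unfolding desc_below_def by simp
    have im: "(i - 1) mod P = P - 1" "(i - 1) div P = c - 1"
    proof -
      have Pc: "P * c = P * (c - 1) + P" using c0 by (cases c) simp_all
      have h: "i - 1 = (P - 1) + P * (c - 1)" using ir True Pc P0 by simp
      have "P - 1 < P" using P0 by simp
      from divmod_decomp[OF this, of "c - 1"]
      show "(i - 1) mod P = P - 1" "(i - 1) div P = c - 1" unfolding h by simp_all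
    qed
    have "D (X r * W c) = X r * D (W c) + W c * D (X r)" by (rule der_mult[OF der])
    also have "\<dots> = W (c - 1) * X (P - 1)" using True X0 DW c0 by (simp add: der_1[OF der])
    finally show ?thesis using im by (simp add: mult.commute)
  qed
  show "D (X (i mod p ^ K) * (w ^ (i div p ^ K) * fp_inv p (fact (i div p ^ K)))) =
        X ((i - 1) mod p ^ K) * (w ^ ((i - 1) div p ^ K) * fp_inv p (fact ((i - 1) div p ^ K)))"
    using goal unfolding W_def r_c_def P_def .
qed

end

lemma desc_below_cong:
  assumes "\<forall>i<p ^ K. X i = Y i" "p > 0"
  shows "desc_below p D K X = desc_below p D K Y"
proof -
  have "X 0 = Y 0" using assms by simp
  moreover have "\<forall>i. 1 \<le> i \<longrightarrow> i < p ^ K \<longrightarrow> (D (X i) = X (i - 1) \<longleftrightarrow> D (Y i) = Y (i - 1))"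
    using assms(1) by auto
  ultimately show ?thesis unfolding desc_below_def by auto
qed

context
  fixes p :: nat and D :: "'a::comm_ring_1 \<Rightarrow> 'a" and yy :: "nat \<Rightarrow> 'a" and e :: enat
  assumes prime: "prime p" and char: "of_nat p = (0::'a)" and der: "is_derivation D"
    and hyp: "\<forall>k. enat k < e \<longrightarrow> yy k ^ p = 0 \<and> (D ^^ (p ^ k)) (yy k) = 1"
begin

abbreviation "u \<equiv> xpp p D yy"

lemma fp_inv_Suc0: "fp_inv p (Suc 0) = (1::'a)"
  using fp_inv_1[OF prime char] by simp

lemma pk_minus1_decomp: "p ^ Suc k - 1 = (p ^ k - 1) + p ^ k * (p - 1)"
proof -
  have "p ^ k \<ge> 1" using p_gt0[OF prime char] by simp
  moreover have "p ^ Suc k = p ^ k * (p - 1) + p ^ k" using p_gt0[OF prime char]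
    by (cases p) (simp_all add: algebra_simps)
  ultimately show ?thesis by simp
qed

lemma dpr_pk_minus1:
  "dpr p (Suc k) u (p ^ Suc k - 1) = dpr p k u (p ^ k - 1) * (u k ^ (p - 1) * fp_inv p (fact (p - 1)))"
proof -
  have lt: "p ^ k - 1 < p ^ k" using p_gt0[OF prime char] by simp
  have m: "(p ^ Suc k - 1) mod p ^ k = p ^ k - 1" "(p ^ Suc k - 1) div p ^ k = p - 1"
    unfolding pk_minus1_decomp using divmod_decomp[OF lt] by simp_all
  have "p ^ Suc k - 1 < p ^ Suc k" using p_gt0[OF prime char] by simp
  from dpr_Suc[OF prime char this, of u] show ?thesis unfolding m .
qed

lemma Q_eq: "(\<Prod>l<k. u l ^ (p - 1) * fp_inv p (fact (p - 1))) = dpr p k u (p ^ k - 1)"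
proof (induction k)
  case 0 thus ?case by (simp add: dpr_def)
next
  case (Suc k)
  have "(\<Prod>l<Suc k. u l ^ (p - 1) * fp_inv p (fact (p - 1))) =
     (\<Prod>l<k. u l ^ (p - 1) * fp_inv p (fact (p - 1))) * (u k ^ (p - 1) * fp_inv p (fact (p - 1)))"
    by (rule prod.lessThan_Suc)
  also have "\<dots> = dpr p k u (p ^ k - 1) * (u k ^ (p - 1) * fp_inv p (fact (p - 1)))" using Suc by simp
  also have "\<dots> = dpr p (Suc k) u (p ^ Suc k - 1)" by (rule dpr_pk_minus1[symmetric])
  finally show ?case .
qed

lemma dpr_at_pk: "dpr p (Suc k) u (p ^ k) = u k"
proof -
  have lt: "p ^ k < p ^ Suc k" using p_gt1[OF prime char] by simp
  have m: "p ^ k mod p ^ k = 0" "p ^ k div p ^ k = 1" using p_gt0[OF prime char] by simp_all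
  show ?thesis using dpr_Suc[OF prime char lt, of u] unfolding m
    by (simp add: dpr_0[OF prime char] fp_inv_1[OF prime char] fp_inv_Suc0)
qed

lemma dpr_at_pkm1: "dpr p (Suc k) u (p ^ k - 1) = dpr p k u (p ^ k - 1)"
proof -
  have "p ^ k < p ^ Suc k" using p_gt1[OF prime char] by simp
  hence lt: "p ^ k - 1 < p ^ Suc k" by (rule le_less_trans[OF diff_le_self])
  have m: "(p ^ k - 1) mod p ^ k = p ^ k - 1" "(p ^ k - 1) div p ^ k = 0" using p_gt0[OF prime char] by simp_all
  show ?thesis using dpr_Suc[OF prime char lt, of u] unfolding m
    by (simp add: fp_inv_1[OF prime char] fp_inv_Suc0)
qed

lemma step_constr:
  assumes inv: "desc_below p D K (dpr p K u)" "\<forall>k<K. u k ^ p = 0" and Ke: "enat K < e"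
  shows "u K ^ p = 0 \<and> D (u K) = dpr p K u (p ^ K - 1)"
proof (cases K)
  case 0
  have "yy 0 ^ p = 0" "(D ^^ 1) (yy 0) = 1" using hyp Ke 0 by auto
  thus ?thesis using 0 by (simp add: xpp_0 dpr_def)
next
  case (Suc k)
  define P where "P = p ^ k"
  have P0: "P > 0" unfolding P_def using p_gt0[OF prime char] by simp
  define X where "X = dpr p (Suc k) u"
  define Q where "Q = dpr p k u (P - 1)"
  define uk where "uk = u k"
  define z where "z = yy (Suc k)"
  define E where "E = D ^^ P"
  have EE: "is_derivation E" unfolding E_def P_def by (rule derpow_ppow_derivation[OF prime char der])
  have hz: "z ^ p = 0" "(D ^^ (p ^ Suc k)) z = 1" using hyp Ke Suc unfolding z_def by auto
  have descX: "desc_below p D (Suc k) X" using inv Suc X_def by simp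
  have iterX: "iter_below p (Suc k) X" unfolding X_def by (rule dpr_iter[OF prime char]) (use inv Suc in simp)
  have ukp: "uk ^ p = 0" using inv Suc uk_def by simp
  have PltS: "P < p ^ Suc k" unfolding P_def using p_gt1[OF prime char] by simp
  have XP: "X P = uk" unfolding X_def P_def uk_def by (rule dpr_at_pk)
  have XPm1: "X (P - 1) = Q" unfolding X_def Q_def P_def by (rule dpr_at_pkm1)
  have Ej: "(D ^^ (P * j)) = E ^^ j" for j unfolding E_def by (simp add: funpow_mult)
  define \<phi> where "\<phi> = (\<Sum>j<p. (-1) ^ j * uk ^ j * fp_inv p (fact j) * (D ^^ (P * j)) z)"
  have uS: "u (Suc k) = (D ^^ (P - 1)) (Q * \<phi>)"
    using xpp_Suc[of p D yy k] neg1_pow_pminus1[OF prime char] Q_eq[of k]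
    unfolding \<phi>_def Q_def P_def uk_def z_def by simp
  have EQ: "E Q = 0"
  proof -
    have "P - 1 < p ^ Suc k" using PltS by simp
    from desc_pow[OF der descX this, of P] show ?thesis unfolding E_def XPm1 using P0 by simp
  qed
  have Euk: "E uk = 1"
  proof -
    from desc_pow[OF der descX PltS, of P] show ?thesis unfolding E_def XP
      using descX unfolding desc_below_def by simp
  qed
  define t where "t = (\<lambda>j. (-1) ^ j * fp_inv p (fact j) * uk ^ j * (E ^^ Suc j) z)"
  define v where "v = (\<lambda>j. (-1) ^ j * fp_inv p (fact j) * (of_nat j * uk ^ (j - 1)) * (E ^^ j) z)"
  have Eterm: "E ((-1) ^ j * uk ^ j * fp_inv p (fact j) * (D ^^ (P * j)) z) = t j + v j" for j
  proof -
    have c0: "E ((-1) ^ j * fp_inv p (fact j)) = 0"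
      using der_neg1_pow[OF EE] der_mult[OF EE] der_of_nat[OF EE] unfolding fp_inv_def by simp
    have "(-1) ^ j * uk ^ j * fp_inv p (fact j) * (D ^^ (P * j)) z = ((-1) ^ j * fp_inv p (fact j)) * (uk ^ j * (E ^^ j) z)"
      unfolding Ej by (simp add: ac_simps)
    hence "E ((-1) ^ j * uk ^ j * fp_inv p (fact j) * (D ^^ (P * j)) z) =
        ((-1) ^ j * fp_inv p (fact j)) * (uk ^ j * E ((E ^^ j) z) + (E ^^ j) z * E (uk ^ j))"
      using der_const_mult[OF EE c0] der_mult[OF EE] by simp
    also have "\<dots> = t j + v j" unfolding t_def v_def
      using der_power'[OF EE, of uk j] Euk by (simp add: algebra_simps)
    finally show ?thesis .
  qed
  have vSuc: "v (Suc j) = - t j" if "Suc j < p" for j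
  proof -
    have eq: "(of_nat (Suc j) :: 'a) * fp_inv p (fact (Suc j)) = fp_inv p (fact j)"
      using ofnat_fpinv_fact[OF prime char der, of "Suc j"] that by (simp del: fact_Suc of_nat_Suc)
    have "v (Suc j) = - ((-1) ^ j * ((of_nat (Suc j) :: 'a) * fp_inv p (fact (Suc j))) * uk ^ j * (E ^^ Suc j) z)"
      unfolding v_def by (simp add: algebra_simps del: fact_Suc of_nat_Suc)
    also have "\<dots> = - t j" unfolding t_def eq by (simp add: ac_simps)
    finally show ?thesis .
  qed
  have Ephi: "E \<phi> = t (p - 1)"
  proof -
    have pS: "p = Suc (p - 1)" using p_gt0[OF prime char] by simp
    have "E \<phi> = (\<Sum>j<p. E ((-1) ^ j * uk ^ j * fp_inv p (fact j) * (D ^^ (P * j)) z))"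
      unfolding \<phi>_def by (rule der_sum[OF EE])
    also have "\<dots> = (\<Sum>j<p. t j + v j)" by (rule sum.cong[OF refl Eterm])
    also have "\<dots> = (\<Sum>j<p. t j) + (\<Sum>j<p. v j)" by (rule sum.distrib)
    also have "(\<Sum>j<p. v j) = v 0 + (\<Sum>j<p - 1. v (Suc j))"
      by (subst pS) (rule sum.lessThan_Suc_shift)
    also have "(\<Sum>j<p - 1. v (Suc j)) = (\<Sum>j<p - 1. - t j)"
      by (rule sum.cong) (use vSuc pS in auto)
    also have "(\<Sum>j<p. t j) = (\<Sum>j<p - 1. t j) + t (p - 1)"
      by (subst pS) (rule sum.lessThan_Suc)
    finally show ?thesis unfolding v_def by (simp add: sum_negf)
  qed
  have Ep: "(E ^^ p) z = 1" using hz unfolding E_def P_def by (simp add: funpow_mult mult.commute)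
  have DuS: "D (u (Suc k)) = Q * (uk ^ (p - 1) * fp_inv p (fact (p - 1)))"
  proof -
    have "D (u (Suc k)) = (D ^^ Suc (P - 1)) (Q * \<phi>)" unfolding uS by simp
    also have "Suc (P - 1) = P" using P0 by simp
    also have "(D ^^ P) (Q * \<phi>) = Q * E \<phi> + \<phi> * E Q" unfolding E_def[symmetric] by (rule der_mult[OF EE])
    also have "\<dots> = Q * t (p - 1)" using EQ Ephi by simp
    also have "t (p - 1) = uk ^ (p - 1) * fp_inv p (fact (p - 1))"
    proof -
      have "Suc (p - 1) = p" using p_gt0[OF prime char] by simp
      thus ?thesis unfolding t_def using Ep neg1_pow_pminus1[OF prime char] by (simp add: ac_simps)
    qed
    finally show ?thesis .
  qed
  have phip: "\<phi> ^ p = 0"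
  proof -
    have "\<phi> ^ p = (\<Sum>j<p. ((-1) ^ j * uk ^ j * fp_inv p (fact j) * (D ^^ (P * j)) z) ^ p)"
      unfolding \<phi>_def by (rule frob_sum[OF prime char])
    also have "\<dots> = (\<Sum>j<p. 0)"
    proof (rule sum.cong)
      fix j assume "j \<in> {..<p}"
      show "((-1) ^ j * uk ^ j * fp_inv p (fact j) * (D ^^ (P * j)) z) ^ p = 0"
      proof (cases j)
        case 0 thus ?thesis using hz by (simp add: power_mult_distrib)
      next
        case (Suc j')
        have "(uk ^ j) ^ p = (uk ^ p) ^ j" by (simp only: power_mult[symmetric] mult.commute)
        hence "(uk ^ j) ^ p = 0" using ukp Suc by simp
        thus ?thesis by (simp add: power_mult_distrib)
      qed
    qed simp
    finally show ?thesis by simp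
  qed
  have uSp: "u (Suc k) ^ p = 0"
  proof -
    have "u (Suc k) = (\<Sum>m\<le>P - 1. of_nat ((P - 1) choose m) * (D ^^ m) Q * (D ^^ (P - 1 - m)) \<phi>)"
      unfolding uS by (rule leibniz[OF der])
    hence "u (Suc k) ^ p = (\<Sum>m\<le>P - 1. (of_nat ((P - 1) choose m) * (D ^^ m) Q * (D ^^ (P - 1 - m)) \<phi>) ^ p)"
      using frob_sum[OF prime char] by simp
    also have "\<dots> = (\<Sum>m\<le>P - 1. 0)"
    proof (rule sum.cong)
      fix m assume m: "m \<in> {..P - 1}"
      have lt: "P - 1 < p ^ Suc k" using PltS by simp
      have DQ: "(D ^^ m) Q = X (P - 1 - m)"
        using desc_pow[OF der descX lt, of m] m XPm1 by simp
      show "(of_nat ((P - 1) choose m) * (D ^^ m) Q * (D ^^ (P - 1 - m)) \<phi>) ^ p = 0"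
      proof (cases "m = P - 1")
        case True thus ?thesis using phip by (simp add: power_mult_distrib)
      next
        case False
        have "X (P - 1 - m) ^ p = 0"
        proof (rule iter1_pow_p[OF prime char])
          show "iter1 p (enat (Suc k)) X" using iterX by (simp only: iter_below_iter1)
          show "1 \<le> P - 1 - m" using False m by auto
          show "below_ppow p (enat (Suc k)) (P - 1 - m)" using lt by (simp add: below_ppow_def)
        qed
        thus ?thesis using DQ by (simp add: power_mult_distrib)
      qed
    qed simp
    finally show ?thesis by simp
  qed
  have "dpr p K u (p ^ K - 1) = Q * (uk ^ (p - 1) * fp_inv p (fact (p - 1)))"
    unfolding Suc Q_def P_def uk_def by (rule dpr_pk_minus1)
  thus ?thesis using DuS uSp Suc by simp
qed

lemma inv_all:
  assumes "enat K \<le> e"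
  shows "desc_below p D K (dpr p K u) \<and> (\<forall>k<K. u k ^ p = 0)"
  using assms
proof (induction K)
  case 0
  show ?case unfolding desc_below_def dpr_def by simp
next
  case (Suc K)
  have Ke: "enat K < e" using Suc.prems by (simp only: Suc_ile_eq)
  hence IH: "desc_below p D K (dpr p K u)" "\<forall>k<K. u k ^ p = 0" using Suc.IH by auto
  have st: "u K ^ p = 0" "D (u K) = dpr p K u (p ^ K - 1)" using step_constr[OF IH Ke] by auto
  have XI: "iter_below p K (dpr p K u)" by (rule dpr_iter[OF prime char IH(2)])
  define Yf where "Yf = (\<lambda>i. dpr p K u (i mod p ^ K) * (u K ^ (i div p ^ K) * fp_inv p (fact (i div p ^ K))))"
  have d1: "desc_below p D (Suc K) Yf"
    unfolding Yf_def by (rule extend_desc[OF prime char der IH(1) XI st(2)])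
  have eqf: "\<forall>i<p ^ Suc K. dpr p (Suc K) u i = Yf i"
    unfolding Yf_def using dpr_Suc[OF prime char] by simp
  have "desc_below p D (Suc K) (dpr p (Suc K) u) = desc_below p D (Suc K) Yf"
    by (rule desc_below_cong[OF eqf p_gt0[OF prime char]])
  hence "desc_below p D (Suc K) (dpr p (Suc K) u)" using d1 by simp
  thus ?case using IH(2) st(1) less_Suc_eq by auto
qed

lemma xseq_0: "xseq p D yy 0 = 1"
  unfolding xseq_dprod dprod_def fac_def using fp_inv_1[OF prime char] by simp

lemma xseq_desc:
  assumes j: "below_ppow p e j"
  shows "(D ^^ m) (xseq p D yy j) = (if m \<le> j then xseq p D yy (j - m) else 0)"
proof -
  obtain K where K: "enat K \<le> e" "j < p ^ K"
  proof (cases e)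
    case (enat M) thus ?thesis using that j by (auto simp: below_ppow_def)
  next
    case infinity thus ?thesis using that lt_ppow_self[OF prime char, of j] by auto
  qed
  have d: "desc_below p D K (dpr p K u)" using inv_all[OF K(1)] by simp
  have "(D ^^ m) (dpr p K u j) = (if m \<le> j then dpr p K u (j - m) else 0)"
    by (rule desc_pow[OF der d K(2)])
  moreover have "xseq p D yy j = dpr p K u j" unfolding xseq_dprod by (rule dprod_eq_dpr[OF prime char K(2)])
  moreover have "xseq p D yy (j - m) = dpr p K u (j - m)" unfolding xseq_dprod
    by (rule dprod_eq_dpr[OF prime char]) (use K in simp)
  ultimately show ?thesis by simp
qed

lemma xseq_iter: "iter1 p e (xseq p D yy)"
  unfolding xseq_dprod
proof (rule iter1_dprod[OF prime char], intro allI impI)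
  fix k assume "enat k < e"
  hence "enat (Suc k) \<le> e" by (simp only: Suc_ile_eq)
  thus "u k ^ p = 0" using inv_all by blast
qed

end

lemma der_mult_zero: "is_derivation D \<Longrightarrow> D a = 0 \<Longrightarrow> D b = 0 \<Longrightarrow> D (a * b) = 0"
  by (simp add: der_mult)
lemma der_power_zero: "is_derivation D \<Longrightarrow> D a = 0 \<Longrightarrow> D (a ^ n) = 0"
  by (simp add: der_power')
lemma der_prod_zero: "is_derivation D \<Longrightarrow> (\<forall>x\<in>S. D (f x) = 0) \<Longrightarrow> D (\<Prod>x\<in>S. f x) = 0"
  by (induction S rule: infinite_finite_induct) (simp_all add: der_1 der_mult)
lemma der_sum_zero: "is_derivation D \<Longrightarrow> (\<forall>x\<in>S. D (f x) = 0) \<Longrightarrow> D (\<Sum>x\<in>S. f x) = 0"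
  by (simp add: der_sum)
lemma der_comm_zero:
  assumes "is_derivation D" "D' \<circ> D = D \<circ> D'" "D' x = 0"
  shows "D' ((D ^^ m) x) = 0"
  using comm_funpow[OF assms(2)] assms by (simp add: derpow_0)

lemma kill_xpp:
  assumes prime: "prime p" and char: "of_nat p = (0::'a::comm_ring_1)"
    and D: "is_derivation (D :: 'a \<Rightarrow> 'a)" and D': "is_derivation D'" and comm: "D' \<circ> D = D \<circ> D'"
    and ky: "\<forall>k. enat k < e \<longrightarrow> D' (yy k) = 0"
  shows "enat k < e \<Longrightarrow> D' (xpp p D yy k) = 0"
proof (induction k rule: less_induct)
  case (less k)
  show ?case
  proof (cases k)
    case 0 thus ?thesis using ky less.prems by (simp add: xpp_0)
  next
    case (Suc k')
    have lt: "enat l < e" if "l \<le> k'" for l using less.prems Suc that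
      by (meson enat_ord_simps(2) le_imp_less_Suc order_le_less_trans less_imp_le enat_ord_simps(1))
    have ih: "D' (xpp p D yy l) = 0" if "l \<le> k'" for l using less.IH[of l] lt[OF that] Suc that by simp
    have fi: "D' (fp_inv p m) = 0" for m unfolding fp_inv_def by (rule der_of_nat[OF D'])
    have c1: "D' (\<Prod>l<k'. xpp p D yy l ^ (p - 1) * fp_inv p (fact (p - 1))) = 0"
      by (rule der_prod_zero[OF D']) (use ih fi der_mult_zero[OF D'] der_power_zero[OF D'] in auto)
    have c2: "D' (\<Sum>j<p. (-1) ^ j * xpp p D yy k' ^ j * fp_inv p (fact j) * (D ^^ (p ^ k' * j)) (yy (Suc k'))) = 0"
    proof (rule der_sum_zero[OF D'], intro ballI)
      fix j
      have "D' ((D ^^ (p ^ k' * j)) (yy (Suc k'))) = 0"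
        by (rule der_comm_zero[OF D comm]) (use ky less.prems Suc in auto)
      thus "D' ((-1) ^ j * xpp p D yy k' ^ j * fp_inv p (fact j) * (D ^^ (p ^ k' * j)) (yy (Suc k'))) = 0"
        using ih[of k'] fi der_neg1_pow[OF D'] by (simp add: der_mult_zero[OF D'] der_power_zero[OF D'])
    qed
    have "D' ((D ^^ (p ^ k' - 1)) ((\<Prod>l<k'. xpp p D yy l ^ (p - 1) * fp_inv p (fact (p - 1))) *
      (\<Sum>j<p. (-1) ^ j * xpp p D yy k' ^ j * fp_inv p (fact j) * (D ^^ (p ^ k' * j)) (yy (Suc k'))))) = 0"
      by (rule der_comm_zero[OF D comm]) (use c1 c2 der_mult_zero[OF D'] in simp)
    thus ?thesis unfolding Suc xpp_Suc using der_neg1_pow[OF D'] by (simp add: der_mult_zero[OF D'])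
  qed
qed

lemma kill_xseq:
  assumes prime: "prime p" and char: "of_nat p = (0::'a::comm_ring_1)"
    and D: "is_derivation (D :: 'a \<Rightarrow> 'a)" and D': "is_derivation D'" and comm: "D' \<circ> D = D \<circ> D'"
    and ky: "\<forall>k. enat k < e \<longrightarrow> D' (yy k) = 0" and j: "below_ppow p e j"
  shows "D' (xseq p D yy j) = 0"
  unfolding xseq_dprod dprod_def
proof (rule der_prod_zero[OF D'], intro ballI)
  fix k assume k: "k \<in> {..j}"
  show "D' (fac p (xpp p D yy) j k) = 0"
  proof (cases "j div p ^ k mod p = 0")
    case True thus ?thesis using fac_zero[OF prime char] der_1[OF D'] by simp
  next
    case False
    hence "j div p ^ k \<noteq> 0" by (intro notI) simp
    hence pk: "p ^ k \<le> j" using div_eq_0_iff p_gt0[OF prime char] by (metis not_le power_eq_0_iff)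
    have "enat k < e"
    proof (cases e)
      case (enat M)
      hence "j < p ^ M" using j by (simp add: below_ppow_def)
      hence "p ^ k < p ^ M" using pk by simp
      hence "k < M" using p_gt1[OF prime char] by (simp add: power_strict_increasing_iff)
      thus ?thesis using enat by simp
    qed simp
    hence "D' (xpp p D yy k) = 0" by (rule kill_xpp[OF prime char D D' comm ky])
    moreover have "D' (fp_inv p m) = 0" for m unfolding fp_inv_def by (rule der_of_nat[OF D'])
    ultimately show ?thesis unfolding fac_def by (simp add: der_mult_zero[OF D'] der_power_zero[OF D'])
  qed
qed

lemma dpow_zero: "(\<forall>l<n. \<alpha> l = 0) \<Longrightarrow> dpow \<delta> n \<alpha> = id"
  by (induction n) auto

lemma dpow_mvec: "dpow \<delta> n (mvec i m) = (if i < n then \<delta> i ^^ m else id)"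
proof (induction n)
  case 0 thus ?case by simp
next
  case (Suc n)
  show ?case
  proof (cases "i = n")
    case True
    have "dpow \<delta> n (mvec i m) = id" by (rule dpow_zero) (use True in \<open>simp add: mvec_def\<close>)
    thus ?thesis using True by (simp add: mvec_def)
  next
    case False
    thus ?thesis using Suc by (auto simp: mvec_def)
  qed
qed

context
  fixes n :: nat and \<delta> :: "nat \<Rightarrow> 'a::comm_ring_1 \<Rightarrow> 'a"
  assumes ders: "\<forall>i<n. is_derivation (\<delta> i)"
    and comm: "\<forall>i<n. \<forall>j<n. \<delta> i \<circ> \<delta> j = \<delta> j \<circ> \<delta> i"
begin

lemma derpow_prod_single:
  assumes j: "j < n" and kill: "\<forall>i<n. i \<noteq> j \<longrightarrow> \<delta> j (F i) = 0"
  shows "(\<delta> j ^^ m) (\<Prod>i<n. F i) = (\<Prod>i<n. if i = j then (\<delta> j ^^ m) (F i) else F i)"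
proof -
  have D: "is_derivation (\<delta> j)" using ders j by simp
  have jn: "j \<in> {..<n}" using j by simp
  have c: "\<delta> j (\<Prod>i\<in>{..<n} - {j}. F i) = 0"
    by (rule der_prod_zero[OF D]) (use kill in auto)
  have "(\<Prod>i<n. F i) = F j * (\<Prod>i\<in>{..<n} - {j}. F i)" by (rule prod.remove[OF _ jn]) simp
  hence "(\<delta> j ^^ m) (\<Prod>i<n. F i) = (\<Prod>i\<in>{..<n} - {j}. F i) * (\<delta> j ^^ m) (F j)"
    using derpow_const_mult[OF D c, of m "F j"] by (simp add: mult.commute)
  also have "\<dots> = (\<Prod>i<n. if i = j then (\<delta> j ^^ m) (F i) else F i)"
  proof -
    have "(\<Prod>i<n. if i = j then (\<delta> j ^^ m) (F i) else F i) =
        (if j = j then (\<delta> j ^^ m) (F j) else F j) * (\<Prod>i\<in>{..<n} - {j}. if i = j then (\<delta> j ^^ m) (F i) else F i)"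
      by (rule prod.remove[OF _ jn]) simp
    also have "(\<Prod>i\<in>{..<n} - {j}. if i = j then (\<delta> j ^^ m) (F i) else F i) = (\<Prod>i\<in>{..<n} - {j}. F i)"
      by (rule prod.cong) auto
    finally show ?thesis by (simp add: mult.commute)
  qed
  finally show ?thesis .
qed

lemma dpow_prod_aux:
  assumes "n' \<le> n" and "\<forall>i<n. \<forall>j<n. i \<noteq> j \<longrightarrow> \<delta> j (F i) = 0"
  shows "dpow \<delta> n' \<alpha> (\<Prod>i<n. F i) = (\<Prod>i<n. if i < n' then (\<delta> i ^^ \<alpha> i) (F i) else F i)"
  using assms
proof (induction n' arbitrary: F)
  case 0 thus ?case by simp
next
  case (Suc n')
  have n'n: "n' < n" using Suc.prems by simp
  define F' where "F' = F(n' := (\<delta> n' ^^ \<alpha> n') (F n'))"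
  have "(\<delta> n' ^^ \<alpha> n') (\<Prod>i<n. F i) = (\<Prod>i<n. if i = n' then (\<delta> n' ^^ \<alpha> n') (F i) else F i)"
    using derpow_prod_single[OF n'n, of F "\<alpha> n'"] Suc.prems by simp
  also have "\<dots> = (\<Prod>i<n. F' i)" by (rule prod.cong) (auto simp: F'_def)
  finally have s1: "(\<delta> n' ^^ \<alpha> n') (\<Prod>i<n. F i) = (\<Prod>i<n. F' i)" .
  have kill': "\<forall>i<n. \<forall>j<n. i \<noteq> j \<longrightarrow> \<delta> j (F' i) = 0"
  proof (intro allI impI)
    fix i j assume ij: "i < n" "j < n" "i \<noteq> j"
    show "\<delta> j (F' i) = 0"
    proof (cases "i = n'")
      case True
      have "\<delta> j ((\<delta> n' ^^ \<alpha> n') (F n')) = 0"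
        by (rule der_comm_zero) (use ders comm n'n ij True Suc.prems in auto)
      thus ?thesis using True F'_def by simp
    next
      case False thus ?thesis using F'_def Suc.prems ij by simp
    qed
  qed
  have "dpow \<delta> (Suc n') \<alpha> (\<Prod>i<n. F i) = dpow \<delta> n' \<alpha> (\<Prod>i<n. F' i)" using s1 by simp
  also have "\<dots> = (\<Prod>i<n. if i < n' then (\<delta> i ^^ \<alpha> i) (F' i) else F' i)"
    using Suc.IH[of F'] kill' Suc.prems by simp
  also have "\<dots> = (\<Prod>i<n. if i < Suc n' then (\<delta> i ^^ \<alpha> i) (F i) else F i)"
  proof (rule prod.cong[OF refl])
    fix x assume "x \<in> {..<n}"
    show "(if x < n' then (\<delta> x ^^ \<alpha> x) (F' x) else F' x) = (if x < Suc n' then (\<delta> x ^^ \<alpha> x) (F x) else F x)"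
      by (cases "x = n'") (auto simp: F'_def)
  qed
  finally show ?case .
qed

lemma dpow_prod:
  assumes "\<forall>i<n. \<forall>j<n. i \<noteq> j \<longrightarrow> \<delta> j (F i) = 0"
  shows "dpow \<delta> n \<alpha> (\<Prod>i<n. F i) = (\<Prod>i<n. (\<delta> i ^^ \<alpha> i) (F i))"
  using dpow_prod_aux[OF le_refl assms] by simp

end

definition slice_ok :: "nat \<Rightarrow> nat \<Rightarrow> (nat \<Rightarrow> 'a::comm_ring_1 \<Rightarrow> 'a) \<Rightarrow> (nat \<Rightarrow> enat) \<Rightarrow> nat \<Rightarrow> (nat \<Rightarrow> 'a) \<Rightarrow> bool" where
  "slice_ok p n \<delta> d i X \<longleftrightarrow> X 0 = 1 \<and>
     (\<forall>m j. below_ppow p (d i) j \<longrightarrow> (\<delta> i ^^ m) (X j) = (if m \<le> j then X (j - m) else 0)) \<and>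
     iter1 p (d i) X \<and>
     (\<forall>l<n. l \<noteq> i \<longrightarrow> (\<forall>j. below_ppow p (d i) j \<longrightarrow> \<delta> l (X j) = 0))"

lemma below_0: "p > 0 \<Longrightarrow> below_ppow p e 0"
  unfolding below_ppow_def by (cases e) auto

lemma below_mono': "below_ppow p e a \<Longrightarrow> b \<le> a \<Longrightarrow> below_ppow p e b"
  unfolding below_ppow_def by (cases e) auto

lemma choose_add_sym: "(a + b) choose a = (a + b) choose (b::nat)"
  using binomial_symmetric[of a "a + b"] by simp

context
  fixes p n :: nat and \<delta> :: "nat \<Rightarrow> 'a::comm_ring_1 \<Rightarrow> 'a" and d :: "nat \<Rightarrow> enat"
  assumes prime: "prime p" and char: "of_nat p = (0::'a)"
    and ders: "\<forall>i<n. is_derivation (\<delta> i)"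
    and comm: "\<forall>i<n. \<forall>j<n. \<delta> i \<circ> \<delta> j = \<delta> j \<circ> \<delta> i"
begin

lemma prod_descent:
  assumes X: "\<forall>i<n. slice_ok p n \<delta> d i (X i)"
  shows "restrict (\<lambda>\<alpha>. \<Prod>i<n. X i (\<alpha> i)) (idx_set p n d) \<in> iter_descents p n \<delta> d"
proof -
  define y where "y = restrict (\<lambda>\<alpha>. \<Prod>i<n. X i (\<alpha> i)) (idx_set p n d)"
  have p0: "p > 0" using prime_gt_0_nat[OF prime] .
  have X0: "\<forall>i<n. X i 0 = 1" using X unfolding slice_ok_def by blast
  have Xd: "\<And>i m j. i < n \<Longrightarrow> below_ppow p (d i) j \<Longrightarrow> (\<delta> i ^^ m) (X i j) = (if m \<le> j then X i (j - m) else 0)"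
    using X unfolding slice_ok_def by blast
  have Xit: "\<And>i. i < n \<Longrightarrow> iter1 p (d i) (X i)" using X unfolding slice_ok_def by blast
  have Xk: "\<And>i l j. i < n \<Longrightarrow> l < n \<Longrightarrow> l \<noteq> i \<Longrightarrow> below_ppow p (d i) j \<Longrightarrow> \<delta> l (X i j) = 0"
    using X unfolding slice_ok_def by blast
  have zI: "(\<lambda>_. 0) \<in> idx_set p n d"
    unfolding idx_set_def natn_def using below_0[OF p0] by simp
  have y0: "y (\<lambda>_. 0) = 1" unfolding y_def using zI X0 by simp
  have desc: "dpow \<delta> n \<alpha> (y \<beta>) = (if (\<forall>i. \<alpha> i \<le> \<beta> i) then y (\<lambda>i. \<beta> i - \<alpha> i) else 0)"
    if \<alpha>: "\<alpha> \<in> natn n" and \<beta>: "\<beta> \<in> idx_set p n d" for \<alpha> \<beta>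
  proof -
    have bb: "\<And>i. i < n \<Longrightarrow> below_ppow p (d i) (\<beta> i)" using \<beta> unfolding idx_set_def by blast
    have "dpow \<delta> n \<alpha> (\<Prod>i<n. X i (\<beta> i)) = (\<Prod>i<n. (\<delta> i ^^ \<alpha> i) (X i (\<beta> i)))"
      by (rule dpow_prod[OF ders comm]) (use Xk bb in auto)
    also have "\<dots> = (\<Prod>i<n. if \<alpha> i \<le> \<beta> i then X i (\<beta> i - \<alpha> i) else 0)"
      by (rule prod.cong) (use Xd bb in auto)
    finally have e: "dpow \<delta> n \<alpha> (y \<beta>) = (\<Prod>i<n. if \<alpha> i \<le> \<beta> i then X i (\<beta> i - \<alpha> i) else 0)"
      unfolding y_def using \<beta> by simp
    show ?thesis
    proof (cases "\<forall>i. \<alpha> i \<le> \<beta> i")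
      case True
      have "(\<lambda>i. \<beta> i - \<alpha> i) \<in> idx_set p n d"
        using \<beta> unfolding idx_set_def natn_def by (auto intro: below_mono')
      thus ?thesis using e True unfolding y_def by simp
    next
      case False
      then obtain i where i: "\<not> \<alpha> i \<le> \<beta> i" by blast
      have "i < n"
      proof (rule ccontr)
        assume "\<not> i < n"
        hence "\<alpha> i = 0" using \<alpha> unfolding natn_def by simp
        thus False using i by simp
      qed
      hence "(\<Prod>i<n. if \<alpha> i \<le> \<beta> i then X i (\<beta> i - \<alpha> i) else 0) = 0"
        using i by (intro prod_zero) auto
      thus ?thesis using e False by (simp only: if_False)
    qed
  qed
  have iter: "y \<alpha> * y \<beta> = (if (\<lambda>i. \<alpha> i + \<beta> i) \<in> idx_set p n d
                       then of_nat (mbinom n \<alpha> \<beta>) * y (\<lambda>i. \<alpha> i + \<beta> i) else 0)"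
    if \<alpha>: "\<alpha> \<in> idx_set p n d" and \<beta>: "\<beta> \<in> idx_set p n d" for \<alpha> \<beta>
  proof -
    have ba: "\<And>i. i < n \<Longrightarrow> below_ppow p (d i) (\<alpha> i)" using \<alpha> unfolding idx_set_def by blast
    have bb: "\<And>i. i < n \<Longrightarrow> below_ppow p (d i) (\<beta> i)" using \<beta> unfolding idx_set_def by blast
    have "y \<alpha> * y \<beta> = (\<Prod>i<n. X i (\<alpha> i) * X i (\<beta> i))"
      unfolding y_def using \<alpha> \<beta> by (simp add: prod.distrib)
    also have "\<dots> = (\<Prod>i<n. if below_ppow p (d i) (\<alpha> i + \<beta> i) then of_nat ((\<alpha> i + \<beta> i) choose \<alpha> i) * X i (\<alpha> i + \<beta> i) else 0)"
      by (rule prod.cong[OF refl]) (use Xit ba bb in \<open>auto simp: iter1_def\<close>)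
    finally have e: "y \<alpha> * y \<beta> = \<dots>" .
    have nat: "(\<lambda>i. \<alpha> i + \<beta> i) \<in> natn n" using \<alpha> \<beta> unfolding idx_set_def natn_def by auto
    show ?thesis
    proof (cases "(\<lambda>i. \<alpha> i + \<beta> i) \<in> idx_set p n d")
      case True
      hence bs: "\<And>i. i < n \<Longrightarrow> below_ppow p (d i) (\<alpha> i + \<beta> i)" unfolding idx_set_def by blast
      have "y \<alpha> * y \<beta> = (\<Prod>i<n. of_nat ((\<alpha> i + \<beta> i) choose \<alpha> i) * X i (\<alpha> i + \<beta> i))"
        using e bs by simp
      also have "\<dots> = (\<Prod>i<n. of_nat ((\<alpha> i + \<beta> i) choose \<alpha> i)) * (\<Prod>i<n. X i (\<alpha> i + \<beta> i))"
        by (rule prod.distrib)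
      also have "(\<Prod>i<n. (of_nat ((\<alpha> i + \<beta> i) choose \<alpha> i) :: 'a)) = of_nat (mbinom n \<alpha> \<beta>)"
        unfolding mbinom_def of_nat_prod by (rule prod.cong[OF refl], rule arg_cong[where f=of_nat], rule choose_add_sym)
      finally show ?thesis using True unfolding y_def by simp
    next
      case False
      then obtain i where i: "i < n" "\<not> below_ppow p (d i) (\<alpha> i + \<beta> i)"
        using nat unfolding idx_set_def by blast
      hence "y \<alpha> * y \<beta> = 0" using e by (intro trans[OF e] prod_zero) auto
      thus ?thesis using False by simp
    qed
  qed
  have "y \<in> extensional (idx_set p n d)" unfolding y_def by simp
  moreover have "is_descent p n \<delta> d y" unfolding is_descent_def using y0 desc by blast
  moreover have "is_iterative p n d y" unfolding is_iterative_def using iter by blast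
  ultimately show ?thesis unfolding iter_descents_def y_def by blast
qed

lemma part1:
  fixes y :: "nat \<Rightarrow> nat \<Rightarrow> 'a"
  assumes hy: "\<forall>i<n. \<forall>k. enat k < d i \<longrightarrow>
           y i k ^ p = 0 \<and> (\<delta> i ^^ (p ^ k)) (y i k) = 1 \<and> (\<forall>j<n. j \<noteq> i \<longrightarrow> \<delta> j (y i k) = 0)"
  shows "restrict (\<lambda>\<alpha>. \<Prod>i<n. xseq p (\<delta> i) (y i) (\<alpha> i)) (idx_set p n d) \<in> iter_descents p n \<delta> d"
proof (rule prod_descent, intro allI impI)
  fix i assume i: "i < n"
  have D: "is_derivation (\<delta> i)" using ders i by simp
  have h: "\<forall>k. enat k < d i \<longrightarrow> y i k ^ p = 0 \<and> (\<delta> i ^^ (p ^ k)) (y i k) = 1" using hy i by blast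
  show "slice_ok p n \<delta> d i (xseq p (\<delta> i) (y i))"
    unfolding slice_ok_def
  proof (intro conjI allI impI)
    show "xseq p (\<delta> i) (y i) 0 = 1" by (rule xseq_0[OF prime char D h])
  next
    fix m j assume "below_ppow p (d i) j"
    thus "(\<delta> i ^^ m) (xseq p (\<delta> i) (y i) j) = (if m \<le> j then xseq p (\<delta> i) (y i) (j - m) else 0)"
      by (rule xseq_desc[OF prime char D h])
  next
    show "iter1 p (d i) (xseq p (\<delta> i) (y i))" by (rule xseq_iter[OF prime char D h])
  next
    fix l j assume l: "l < n" "l \<noteq> i" and j: "below_ppow p (d i) j"
    show "\<delta> l (xseq p (\<delta> i) (y i) j) = 0"
    proof (rule kill_xseq[OF prime char D _ _ _ j])
      show "is_derivation (\<delta> l)" using ders l by simp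
      show "\<delta> l \<circ> \<delta> i = \<delta> i \<circ> \<delta> l" using comm l i by simp
      show "\<forall>k. enat k < d i \<longrightarrow> \<delta> l (y i k) = 0" using hy i l by blast
    qed
  qed
qed

end

definition mset1 :: "nat \<Rightarrow> ('a::comm_ring_1 \<Rightarrow> 'a) \<Rightarrow> enat \<Rightarrow> (nat \<Rightarrow> 'a) \<Rightarrow> 'a set" where
  "mset1 p D e X = {(\<Sum>j\<in>J. c j * X j) | J c.
      finite J \<and> J \<subseteq> jset p e \<and> (\<forall>j\<in>J. c j \<in> kerD D)}"

lemma mset_mset1: "mset p D e x' i = mset1 p D e (\<lambda>j. x' (mvec i j))"
  unfolding mset_def mset1_def ..

context
  fixes p :: nat and D :: "'a::comm_ring_1 \<Rightarrow> 'a" and e :: enat and X :: "nat \<Rightarrow> 'a"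
  assumes prime: "prime p" and char: "of_nat p = (0::'a)" and der: "is_derivation D"
    and X0: "X 0 = 1"
    and Xd: "\<forall>m j. below_ppow p e j \<longrightarrow> (D ^^ m) (X j) = (if m \<le> j then X (j - m) else 0)"
begin

lemma indep:
  assumes "finite J" "\<forall>j\<in>J. below_ppow p e j" "\<forall>j\<in>J. D (c j) = 0" "(\<Sum>j\<in>J. c j * X j) = 0"
  shows "\<forall>j\<in>J. c j = 0"
  using assms
proof (induction "card J" arbitrary: J rule: less_induct)
  case less
  show ?case
  proof (cases "J = {}")
    case True thus ?thesis by simp
  next
    case False
    define m where "m = Max J"
    have mJ: "m \<in> J" unfolding m_def using False less.prems(1) by simp
    have jm: "\<And>j. j \<in> J \<Longrightarrow> j \<le> m" unfolding m_def using less.prems(1) by simp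
    have "(D ^^ m) (\<Sum>j\<in>J. c j * X j) = (\<Sum>j\<in>J. (D ^^ m) (c j * X j))"
      by (rule derpow_sum[OF der])
    also have "\<dots> = (\<Sum>j\<in>J. c j * (D ^^ m) (X j))"
    proof (rule sum.cong[OF refl])
      fix j assume "j \<in> J"
      hence "D (c j) = 0" using less.prems(3) by blast
      thus "(D ^^ m) (c j * X j) = c j * (D ^^ m) (X j)" by (rule derpow_const_mult[OF der])
    qed
    also have "\<dots> = (\<Sum>j\<in>J. if j = m then c m else 0)"
    proof (rule sum.cong[OF refl])
      fix j assume j: "j \<in> J"
      have bj: "below_ppow p e j" using less.prems(2) j by blast
      have "(D ^^ m) (X j) = (if m \<le> j then X (j - m) else 0)" using Xd bj by blast
      thus "c j * (D ^^ m) (X j) = (if j = m then c m else 0)"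
        using jm[OF j] X0 by (cases "j = m") auto
    qed
    also have "\<dots> = c m" using mJ less.prems(1) by simp
    finally have cm: "c m = 0" using less.prems(4) derpow_0[OF der] by simp
    have "(\<Sum>j\<in>J - {m}. c j * X j) = 0"
      using sum.remove[OF less.prems(1) mJ, of "\<lambda>j. c j * X j"] less.prems(4) cm by simp
    moreover have "card (J - {m}) < card J" by (rule card_Diff1_less[OF less.prems(1) mJ])
    moreover have "finite (J - {m})" using less.prems(1) by simp
    moreover have "\<forall>j\<in>J - {m}. below_ppow p e j" using less.prems(2) by blast
    moreover have "\<forall>j\<in>J - {m}. D (c j) = 0" using less.prems(3) by blast
    ultimately have "\<forall>j\<in>J - {m}. c j = 0" using less.hyps[of "J - {m}"] by blast
    thus ?thesis using cm by blast
  qed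
qed

lemma sum_if_subset:
  assumes "finite J" "J1 \<subseteq> J"
  shows "(\<Sum>j\<in>J. (if j \<in> J1 then f j else 0)) = (\<Sum>j\<in>J1. f j)"
proof -
  have "(\<Sum>j\<in>J. (if j \<in> J1 then f j else 0)) = (\<Sum>j\<in>J \<inter> J1. f j)"
    by (rule sum.inter_restrict[OF assms(1), symmetric])
  also have "J \<inter> J1 = J1" using assms(2) by blast
  finally show ?thesis .
qed

lemma mset1_0: "0 \<in> mset1 p D e X"
  unfolding mset1_def by (rule CollectI, intro exI[of _ "{}"]) simp

lemma mset1_add:
  assumes "a \<in> mset1 p D e X" "b \<in> mset1 p D e X"
  shows "a + b \<in> mset1 p D e X"
proof -
  obtain J1 c1 where 1: "a = (\<Sum>j\<in>J1. c1 j * X j)" "finite J1" "J1 \<subseteq> jset p e" "\<forall>j\<in>J1. c1 j \<in> kerD D"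
    using assms(1) unfolding mset1_def by blast
  obtain J2 c2 where 2: "b = (\<Sum>j\<in>J2. c2 j * X j)" "finite J2" "J2 \<subseteq> jset p e" "\<forall>j\<in>J2. c2 j \<in> kerD D"
    using assms(2) unfolding mset1_def by blast
  define c where "c = (\<lambda>j. (if j \<in> J1 then c1 j else 0) + (if j \<in> J2 then c2 j else 0))"
  have f: "finite (J1 \<union> J2)" using 1 2 by simp
  have "(\<Sum>j\<in>J1 \<union> J2. c j * X j) = (\<Sum>j\<in>J1 \<union> J2. (if j \<in> J1 then c1 j * X j else 0) + (if j \<in> J2 then c2 j * X j else 0))"
    by (rule sum.cong[OF refl]) (simp add: c_def distrib_right)
  also have "\<dots> = (\<Sum>j\<in>J1 \<union> J2. (if j \<in> J1 then c1 j * X j else 0)) + (\<Sum>j\<in>J1 \<union> J2. (if j \<in> J2 then c2 j * X j else 0))"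
    by (rule sum.distrib)
  also have "\<dots> = a + b" using sum_if_subset[OF f Un_upper1, of "\<lambda>j. c1 j * X j"] sum_if_subset[OF f Un_upper2, of "\<lambda>j. c2 j * X j"] 1 2 by simp
  finally have s: "(\<Sum>j\<in>J1 \<union> J2. c j * X j) = a + b" .
  have k: "\<forall>j\<in>J1 \<union> J2. c j \<in> kerD D"
    using 1 2 unfolding c_def kerD_def by (auto simp: der_add[OF der] der_0[OF der])
  show ?thesis unfolding mset1_def using s f k 1 2 by (intro CollectI exI[of _ "J1 \<union> J2"] exI[of _ c]) auto
qed

lemma mset1_neg:
  assumes "a \<in> mset1 p D e X"
  shows "- a \<in> mset1 p D e X"
proof -
  obtain J1 c1 where 1: "a = (\<Sum>j\<in>J1. c1 j * X j)" "finite J1" "J1 \<subseteq> jset p e" "\<forall>j\<in>J1. c1 j \<in> kerD D"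
    using assms(1) unfolding mset1_def by blast
  have "- a = (\<Sum>j\<in>J1. (- c1 j) * X j)" using 1 by (simp add: sum_negf)
  moreover have "\<forall>j\<in>J1. - c1 j \<in> kerD D" using 1 unfolding kerD_def by (simp add: der_minus[OF der])
  ultimately show ?thesis unfolding mset1_def using 1
    by (intro CollectI exI[of _ J1] exI[of _ "\<lambda>j. - c1 j"]) simp
qed

lemma mset1_diff: "a \<in> mset1 p D e X \<Longrightarrow> b \<in> mset1 p D e X \<Longrightarrow> a - b \<in> mset1 p D e X"
  using mset1_add[of a "- b"] mset1_neg[of b] by simp

lemma mset1_term:
  assumes "g \<in> kerD D" "t \<in> jset p e"
  shows "g * X t \<in> mset1 p D e X"
  unfolding mset1_def using assms by (intro CollectI exI[of _ "{t}"] exI[of _ "\<lambda>_. g"]) simp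

lemma jset_below: "j \<in> jset p e \<Longrightarrow> below_ppow p e j \<and> 1 \<le> j"
  unfolding jset_def by simp

lemma ker_mset1:
  assumes "a \<in> kerD D" "a \<in> mset1 p D e X"
  shows "a = 0"
proof -
  obtain J c where 1: "a = (\<Sum>j\<in>J. c j * X j)" "finite J" "J \<subseteq> jset p e" "\<forall>j\<in>J. c j \<in> kerD D"
    using assms(2) unfolding mset1_def by blast
  have n0: "0 \<notin> J"
  proof
    assume "0 \<in> J"
    hence "0 \<in> jset p e" using 1(3) by blast
    thus False unfolding jset_def by simp
  qed
  define c' where "c' = c(0 := - a)"
  have "(\<Sum>j\<in>insert 0 J. c' j * X j) = c' 0 * X 0 + (\<Sum>j\<in>J. c' j * X j)"
    using 1 n0 by simp
  also have "(\<Sum>j\<in>J. c' j * X j) = (\<Sum>j\<in>J. c j * X j)"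
  proof (rule sum.cong[OF refl])
    fix j assume "j \<in> J"
    hence "j \<noteq> 0" using n0 by (cases j) auto
    thus "c' j * X j = c j * X j" unfolding c'_def by simp
  qed
  also have "\<dots> = a" using 1(1) by simp
  finally have s: "(\<Sum>j\<in>insert 0 J. c' j * X j) = 0" unfolding c'_def using X0 by simp
  have "\<forall>j\<in>insert 0 J. c' j = 0"
  proof (rule indep)
    show "finite (insert 0 J)" using 1 by simp
    show "\<forall>j\<in>insert 0 J. below_ppow p e j"
    proof
      fix j assume "j \<in> insert 0 J"
      thus "below_ppow p e j"
      proof
        assume "j = 0" thus ?thesis using below_0[OF prime_gt_0_nat[OF prime]] by simp
      next
        assume "j \<in> J" hence "j \<in> jset p e" using 1(3) by blast
        thus ?thesis unfolding jset_def by simp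
      qed
    qed
    show "\<forall>j\<in>insert 0 J. D (c' j) = 0"
    proof
      fix j assume "j \<in> insert 0 J"
      thus "D (c' j) = 0"
      proof
        assume "j = 0" thus ?thesis using assms(1) unfolding c'_def kerD_def by (simp add: der_minus[OF der])
      next
        assume j: "j \<in> J" hence "j \<noteq> 0" using n0 by (cases j) auto
        thus ?thesis using 1(4) j unfolding c'_def kerD_def by simp
      qed
    qed
  qed (rule s)
  thus ?thesis unfolding c'_def by simp
qed

lemma mset1_Nset:
  assumes "a \<in> kerD D" "m \<in> mset1 p D e X"
  shows "a + m \<in> Nset p D e"
proof -
  obtain J c where 1: "m = (\<Sum>j\<in>J. c j * X j)" "finite J" "J \<subseteq> jset p e" "\<forall>j\<in>J. c j \<in> kerD D"
    using assms(2) unfolding mset1_def by blast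
  have kill: "(D ^^ N) (a + m) = 0" if N: "N \<ge> 1" "\<forall>j\<in>J. j < N" for N
  proof -
    have "(D ^^ N) a = 0"
    proof -
      obtain N' where N': "N = Suc N'" using N(1) by (cases N) auto
      have "(D ^^ N) a = (D ^^ N') (D a)" unfolding N' funpow_Suc_right by simp
      thus ?thesis using assms(1) derpow_0[OF der] unfolding kerD_def by simp
    qed
    moreover have "(D ^^ N) m = 0"
    proof -
      have "(D ^^ N) m = (\<Sum>j\<in>J. c j * (D ^^ N) (X j))"
        unfolding 1 using 1(4) unfolding kerD_def by (simp add: derpow_sum[OF der] derpow_const_mult[OF der])
      also have "\<dots> = 0"
      proof (rule sum.neutral, rule ballI)
        fix j assume j: "j \<in> J"
        have "below_ppow p e j" using 1(3) j jset_below by blast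
        hence "(D ^^ N) (X j) = (if N \<le> j then X (j - N) else 0)" using Xd by blast
        moreover have "j < N" using N(2) j by blast
        hence "\<not> N \<le> j" by simp
        ultimately show "c j * (D ^^ N) (X j) = 0" by simp
      qed
      finally show ?thesis .
    qed
    ultimately show ?thesis by (simp add: derpow_add[OF der])
  qed
  show ?thesis
  proof (cases e)
    case (enat M)
    have "(D ^^ (p ^ M)) (a + m) = 0"
      by (rule kill) (use prime_gt_0_nat[OF prime] 1(3) jset_below enat in \<open>auto simp: below_ppow_def Suc_le_eq\<close>)
    thus ?thesis unfolding Nset_def enat by simp
  next
    case infinity
    have "(D ^^ Suc (\<Sum>j\<in>J. j)) (a + m) = 0"
    proof (rule kill)
      show "\<forall>j\<in>J. j < Suc (\<Sum>j\<in>J. j)"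
      proof
        fix j assume j: "j \<in> J"
        have "j \<le> (\<Sum>i\<in>J. i)" using member_le_sum[of j J "\<lambda>i. i"] 1(2) j by simp
        thus "j < Suc (\<Sum>j\<in>J. j)" by simp
      qed
    qed simp
    thus ?thesis unfolding Nset_def infinity by (intro CollectI) (simp only: enat.case, rule exI)
  qed
qed

lemma decomp_aux:
  "(D ^^ N) a = 0 \<Longrightarrow> (\<forall>j<N. below_ppow p e j) \<Longrightarrow> \<exists>b m. b \<in> kerD D \<and> m \<in> mset1 p D e X \<and> a = b + m"
proof (induction N arbitrary: a)
  case 0 thus ?case using mset1_0 by (intro exI[of _ 0]) (auto simp: kerD_def der_0[OF der])
next
  case (Suc N)
  define g where "g = (D ^^ N) a"
  have Dg: "D g = 0" using Suc.prems unfolding g_def by simp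
  show ?case
  proof (cases "N = 0")
    case True
    thus ?thesis using Dg mset1_0 unfolding g_def kerD_def by (intro exI[of _ a] exI[of _ 0]) simp
  next
    case False
    have bN: "below_ppow p e N" using Suc.prems by simp
    define a' where "a' = a - g * X N"
    have "(D ^^ N) a' = g - g * (D ^^ N) (X N)"
      unfolding a'_def derpow_diff[OF der] derpow_const_mult[OF der Dg] by (simp add: g_def)
    also have "(D ^^ N) (X N) = 1" using Xd bN X0 by simp
    finally have a0: "(D ^^ N) a' = 0" by simp
    have bl: "\<forall>j<N. below_ppow p e j" using Suc.prems(2) by auto
    obtain b m where bm: "b \<in> kerD D" "m \<in> mset1 p D e X" "a' = b + m"
      using Suc.IH[OF a0 bl] by blast
    have "g * X N \<in> mset1 p D e X"
      by (rule mset1_term) (use Dg bN False in \<open>auto simp: kerD_def jset_def\<close>)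
    hence "m + g * X N \<in> mset1 p D e X" using bm(2) mset1_add by blast
    moreover have "a = b + (m + g * X N)" using bm(3) unfolding a'_def by (simp add: algebra_simps)
    ultimately show ?thesis using bm(1) by blast
  qed
qed

lemma Nset_decomp: "Nset p D e = {a + m | a m. a \<in> kerD D \<and> m \<in> mset1 p D e X}"
proof
  show "{a + m | a m. a \<in> kerD D \<and> m \<in> mset1 p D e X} \<subseteq> Nset p D e"
    using mset1_Nset by blast
next
  show "Nset p D e \<subseteq> {a + m | a m. a \<in> kerD D \<and> m \<in> mset1 p D e X}"
  proof
    fix a assume a: "a \<in> Nset p D e"
    obtain N where N: "(D ^^ N) a = 0" "\<forall>j<N. below_ppow p e j"
    proof (cases e)
      case (enat M)
      thus ?thesis using that a unfolding Nset_def by (auto simp: below_ppow_def)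
    next
      case infinity
      thus ?thesis using that a unfolding Nset_def by (auto simp: below_ppow_def)
    qed
    from decomp_aux[OF N] show "a \<in> {a + m | a m. a \<in> kerD D \<and> m \<in> mset1 p D e X}" by blast
  qed
qed

lemma the_comp:
  assumes "c \<in> kerD D" "v - c \<in> mset1 p D e X"
  shows "(THE c. c \<in> kerD D \<and> v - c \<in> mset1 p D e X) = c"
proof (rule the_equality)
  show "c \<in> kerD D \<and> v - c \<in> mset1 p D e X" using assms by simp
next
  fix c' assume c': "c' \<in> kerD D \<and> v - c' \<in> mset1 p D e X"
  have "(v - c') - (v - c) \<in> mset1 p D e X" using c' assms mset1_diff by blast
  moreover have "(v - c') - (v - c) = c - c'" by simp
  ultimately have m: "c - c' \<in> mset1 p D e X" by simp
  have k: "c - c' \<in> kerD D" using c' assms unfolding kerD_def by (simp add: der_diff[OF der])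
  have "c - c' = 0" by (rule ker_mset1[OF k m])
  thus "c' = c" by simp
qed

end

lemma mvec_0: "mvec i 0 = (\<lambda>_. 0)"
  unfolding mvec_def by auto

lemma mvec_natn: "i < n \<Longrightarrow> mvec i j \<in> natn n"
  unfolding mvec_def natn_def by auto

lemma mvec_idx: "p > 0 \<Longrightarrow> i < n \<Longrightarrow> mvec i j \<in> idx_set p n d \<longleftrightarrow> below_ppow p (d i) j"
  unfolding idx_set_def using mvec_natn[of i n j] below_0[of p]
  by (auto simp: mvec_def below_ppow_def split: enat.splits)

lemma mvec_add: "(\<lambda>l. mvec i a l + mvec i b l) = mvec i (a + b)"
  unfolding mvec_def by auto

lemma mvec_le: "(\<forall>l. mvec i m l \<le> mvec i j l) \<longleftrightarrow> m \<le> j"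
  unfolding mvec_def by (auto dest: spec[of _ i])

lemma mvec_sub: "(\<lambda>l. mvec i j l - mvec i m l) = mvec i (j - m)"
  unfolding mvec_def by auto

lemma mbinom_mvec:
  assumes "i < n"
  shows "mbinom n (mvec i a) (mvec i b) = (a + b) choose a"
proof -
  have "mbinom n (mvec i a) (mvec i b) = (\<Prod>l<n. if l = i then (a + b) choose b else 1)"
    unfolding mbinom_def by (rule prod.cong) (auto simp: mvec_def)
  also have "\<dots> = (a + b) choose b" using assms by (simp add: prod.delta)
  finally show ?thesis using choose_add_sym[of a b] by simp
qed

definition trunc :: "nat \<Rightarrow> (nat \<Rightarrow> nat) \<Rightarrow> nat \<Rightarrow> nat" where
  "trunc m \<alpha> = (\<lambda>l. if l < m then \<alpha> l else 0)"

context
  fixes p n :: nat and \<delta> :: "nat \<Rightarrow> 'a::comm_ring_1 \<Rightarrow> 'a" and d :: "nat \<Rightarrow> enat"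
  assumes prime: "prime p" and char: "of_nat p = (0::'a)"
    and ders: "\<forall>i<n. is_derivation (\<delta> i)"
    and comm: "\<forall>i<n. \<forall>j<n. \<delta> i \<circ> \<delta> j = \<delta> j \<circ> \<delta> i"
begin

lemma p0: "p > 0" using prime_gt_0_nat[OF prime] .

lemma desc_of: "y \<in> iter_descents p n \<delta> d \<Longrightarrow> is_descent p n \<delta> d y"
  unfolding iter_descents_def by blast
lemma iter_of: "y \<in> iter_descents p n \<delta> d \<Longrightarrow> is_iterative p n d y"
  unfolding iter_descents_def by blast

lemma slice_ok_desc:
  assumes y: "y \<in> iter_descents p n \<delta> d" and i: "i < n"
  shows "slice_ok p n \<delta> d i (\<lambda>j. y (mvec i j))"
  unfolding slice_ok_def
proof (intro conjI allI impI)
  have D: "is_descent p n \<delta> d y" by (rule desc_of[OF y])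
  have It: "is_iterative p n d y" by (rule iter_of[OF y])
  show "y (mvec i 0) = 1" using D unfolding is_descent_def mvec_0 by simp
next
  fix m j assume j: "below_ppow p (d i) j"
  have D: "is_descent p n \<delta> d y" by (rule desc_of[OF y])
  have jI: "mvec i j \<in> idx_set p n d" using mvec_idx[OF p0 i] j by simp
  have "dpow \<delta> n (mvec i m) (y (mvec i j)) = (if (\<forall>l. mvec i m l \<le> mvec i j l) then y (\<lambda>l. mvec i j l - mvec i m l) else 0)"
    using D jI mvec_natn[OF i] unfolding is_descent_def by blast
  thus "(\<delta> i ^^ m) (y (mvec i j)) = (if m \<le> j then y (mvec i (j - m)) else 0)"
    unfolding dpow_mvec mvec_le mvec_sub using i by simp
next
  have It: "is_iterative p n d y" by (rule iter_of[OF y])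
  show "iter1 p (d i) (\<lambda>j. y (mvec i j))"
    unfolding iter1_def
  proof (intro allI impI)
    fix a b assume a: "below_ppow p (d i) a" and b: "below_ppow p (d i) b"
    have "y (mvec i a) * y (mvec i b) = (if (\<lambda>l. mvec i a l + mvec i b l) \<in> idx_set p n d
                       then of_nat (mbinom n (mvec i a) (mvec i b)) * y (\<lambda>l. mvec i a l + mvec i b l) else 0)"
      using It mvec_idx[OF p0 i] a b unfolding is_iterative_def by blast
    thus "y (mvec i a) * y (mvec i b) = (if below_ppow p (d i) (a + b) then of_nat ((a + b) choose a) * y (mvec i (a + b)) else 0)"
      unfolding mvec_add mbinom_mvec[OF i] mvec_idx[OF p0 i] .
  qed
next
  fix l j assume l: "l < n" "l \<noteq> i" and j: "below_ppow p (d i) j"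
  have D: "is_descent p n \<delta> d y" by (rule desc_of[OF y])
  have jI: "mvec i j \<in> idx_set p n d" using mvec_idx[OF p0 i] j by simp
  have "dpow \<delta> n (mvec l 1) (y (mvec i j)) = (if (\<forall>l'. mvec l 1 l' \<le> mvec i j l') then y (\<lambda>l'. mvec i j l' - mvec l 1 l') else 0)"
    using D jI mvec_natn[OF l(1)] unfolding is_descent_def by blast
  moreover have nc: "\<not> (\<forall>l'. mvec l 1 l' \<le> mvec i j l')" using l by (auto simp: mvec_def dest: spec[of _ l])
  ultimately have "dpow \<delta> n (mvec l 1) (y (mvec i j)) = 0" by (simp only: nc if_False)
  thus "\<delta> l (y (mvec i j)) = 0" unfolding dpow_mvec using l by simp
qed

lemma trunc_idx: "\<alpha> \<in> idx_set p n d \<Longrightarrow> trunc m \<alpha> \<in> idx_set p n d"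
  unfolding idx_set_def natn_def trunc_def using below_0[OF p0] by auto

lemma prod_decomp:
  assumes y: "y \<in> iter_descents p n \<delta> d" and \<alpha>: "\<alpha> \<in> idx_set p n d"
  shows "y \<alpha> = (\<Prod>i<n. y (mvec i (\<alpha> i)))"
proof -
  have It: "is_iterative p n d y" by (rule iter_of[OF y])
  have D: "is_descent p n \<delta> d y" by (rule desc_of[OF y])
  have "m \<le> n \<Longrightarrow> y (trunc m \<alpha>) = (\<Prod>i<m. y (mvec i (\<alpha> i)))" for m
  proof (induction m)
    case 0
    have "trunc 0 \<alpha> = (\<lambda>_. 0)" unfolding trunc_def by simp
    thus ?case using D unfolding is_descent_def by simp
  next
    case (Suc m)
    have mn: "m < n" using Suc.prems by simp
    have s: "(\<lambda>l. trunc m \<alpha> l + mvec m (\<alpha> m) l) = trunc (Suc m) \<alpha>"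
      unfolding trunc_def mvec_def by auto
    have tI: "trunc m \<alpha> \<in> idx_set p n d" by (rule trunc_idx[OF \<alpha>])
    have mI: "mvec m (\<alpha> m) \<in> idx_set p n d" using \<alpha> mvec_idx[OF p0 mn] unfolding idx_set_def using mn by simp
    have sI: "trunc (Suc m) \<alpha> \<in> idx_set p n d" by (rule trunc_idx[OF \<alpha>])
    have mb: "mbinom n (trunc m \<alpha>) (mvec m (\<alpha> m)) = 1"
      unfolding mbinom_def by (rule prod.neutral) (auto simp: trunc_def mvec_def)
    have "y (trunc m \<alpha>) * y (mvec m (\<alpha> m)) = (if (\<lambda>l. trunc m \<alpha> l + mvec m (\<alpha> m) l) \<in> idx_set p n d
           then of_nat (mbinom n (trunc m \<alpha>) (mvec m (\<alpha> m))) * y (\<lambda>l. trunc m \<alpha> l + mvec m (\<alpha> m) l) else 0)"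
      using It tI mI unfolding is_iterative_def by blast
    hence "y (trunc (Suc m) \<alpha>) = y (trunc m \<alpha>) * y (mvec m (\<alpha> m))" unfolding s mb using sI by simp
    thus ?case using Suc by simp
  qed
  from this[of n] have "y (trunc n \<alpha>) = (\<Prod>i<n. y (mvec i (\<alpha> i)))" by simp
  moreover have "trunc n \<alpha> = \<alpha>" using \<alpha> unfolding trunc_def idx_set_def natn_def by (auto simp: not_less)
  ultimately show ?thesis by simp
qed

lemma below_pk: "below_ppow p e (p ^ k) \<longleftrightarrow> enat k < e"
  unfolding below_ppow_def using p_gt1[OF prime char] by (cases e) (auto simp: power_strict_increasing_iff)

lemma lam_char:
  assumes x': "x' \<in> iter_descents p n \<delta> d" and y: "y \<in> iter_descents p n \<delta> d"
    and i: "i < n" and k: "enat k < d i"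
  shows "lam p \<delta> d x' i k y \<in> kerD (\<delta> i) \<and>
     y (mvec i (p ^ k)) - lam p \<delta> d x' i k y \<in> mset1 p (\<delta> i) (d i) (\<lambda>j. x' (mvec i j))"
proof -
  have Di: "is_derivation (\<delta> i)" using ders i by simp
  have sx: "slice_ok p n \<delta> d i (\<lambda>j. x' (mvec i j))" by (rule slice_ok_desc[OF x' i])
  have sy: "slice_ok p n \<delta> d i (\<lambda>j. y (mvec i j))" by (rule slice_ok_desc[OF y i])
  have X0: "x' (mvec i 0) = 1" and Xd: "\<forall>m j. below_ppow p (d i) j \<longrightarrow> (\<delta> i ^^ m) (x' (mvec i j)) = (if m \<le> j then x' (mvec i (j - m)) else 0)"
    using sx unfolding slice_ok_def by blast+
  have Yd: "\<forall>m j. below_ppow p (d i) j \<longrightarrow> (\<delta> i ^^ m) (y (mvec i j)) = (if m \<le> j then y (mvec i (j - m)) else 0)"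
    using sy unfolding slice_ok_def by blast
  have bk: "below_ppow p (d i) (p ^ k)" using below_pk k by simp
  have "y (mvec i (p ^ k)) \<in> Nset p (\<delta> i) (d i)"
  proof (cases "d i")
    case (enat M)
    have "k < M" using k enat by simp
    hence "p ^ k < p ^ M" using p_gt1[OF prime char] by (simp add: power_strict_increasing_iff)
    hence "(\<delta> i ^^ (p ^ M)) (y (mvec i (p ^ k))) = 0" using Yd bk by simp
    thus ?thesis unfolding Nset_def enat by simp
  next
    case infinity
    have "(\<delta> i ^^ Suc (p ^ k)) (y (mvec i (p ^ k))) = (if Suc (p ^ k) \<le> p ^ k then y (mvec i (p ^ k - Suc (p ^ k))) else 0)"
      using Yd bk by blast
    hence "(\<delta> i ^^ Suc (p ^ k)) (y (mvec i (p ^ k))) = 0" by (simp only: if_not_P[OF Suc_n_not_le_n])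
    thus ?thesis unfolding Nset_def infinity by (intro CollectI) (simp only: enat.case, rule exI)
  qed
  then obtain b m where bm: "b \<in> kerD (\<delta> i)" "m \<in> mset1 p (\<delta> i) (d i) (\<lambda>j. x' (mvec i j))" "y (mvec i (p ^ k)) = b + m"
    unfolding Nset_decomp[OF prime char Di X0 Xd] by blast
  have m: "y (mvec i (p ^ k)) - b \<in> mset1 p (\<delta> i) (d i) (\<lambda>j. x' (mvec i j))" using bm by simp
  have "lam p \<delta> d x' i k y = b"
    unfolding lam_def mset_mset1 by (rule the_comp[OF prime char Di X0 Xd bm(1) m])
  thus ?thesis using bm(1) m by simp
qed

end

lemma ppow_decomp:
  assumes "prime p" "(j::nat) \<ge> 1"
  shows "\<exists>v q. j = p ^ v * q \<and> \<not> p dvd q"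
  using assms(2)
proof (induction j rule: less_induct)
  case (less j)
  show ?case
  proof (cases "p dvd j")
    case False thus ?thesis by (intro exI[of _ 0] exI[of _ j]) simp
  next
    case True
    then obtain j' where j': "j = p * j'" by blast
    have "j' \<ge> 1" using less.prems j' by (cases j') auto
    moreover have "j' < j" using j' prime_gt_1_nat[OF assms(1)] calculation by simp
    ultimately obtain v q where "j' = p ^ v * q" "\<not> p dvd q" using less.IH by blast
    thus ?thesis using j' by (intro exI[of _ "Suc v"] exI[of _ q]) simp
  qed
qed

context
  fixes p n :: nat and \<delta> :: "nat \<Rightarrow> 'a::comm_ring_1 \<Rightarrow> 'a" and d :: "nat \<Rightarrow> enat"
  assumes prime: "prime p" and char: "of_nat p = (0::'a)"
    and ders: "\<forall>i<n. is_derivation (\<delta> i)"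
    and comm: "\<forall>i<n. \<forall>j<n. \<delta> i \<circ> \<delta> j = \<delta> j \<circ> \<delta> i"
begin

lemma lam_Cset:
  assumes x': "x' \<in> iter_descents p n \<delta> d" and y: "y \<in> iter_descents p n \<delta> d"
    and i: "i < n" and k: "enat k < d i"
  shows "lam p \<delta> d x' i k y \<in> Adelta n \<delta> \<and> lam p \<delta> d x' i k y ^ p = 0"
proof -
  define b where "b = lam p \<delta> d x' i k y"
  define v where "v = y (mvec i (p ^ k))"
  define X where "X = (\<lambda>j. x' (mvec i j))"
  have lc: "b \<in> kerD (\<delta> i)" "v - b \<in> mset1 p (\<delta> i) (d i) X"
    using lam_char[OF prime char ders comm x' y i k] unfolding b_def v_def X_def by auto
  obtain J c where Jc: "v - b = (\<Sum>j\<in>J. c j * X j)" "finite J" "J \<subseteq> jset p (d i)" "\<forall>j\<in>J. c j \<in> kerD (\<delta> i)"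
    using lc(2) unfolding mset1_def by blast
  have Di: "is_derivation (\<delta> i)" using ders i by simp
  have sx: "slice_ok p n \<delta> d i X" unfolding X_def by (rule slice_ok_desc[OF prime char ders comm x' i])
  have sy: "slice_ok p n \<delta> d i (\<lambda>j. y (mvec i j))" by (rule slice_ok_desc[OF prime char ders comm y i])
  have X0: "X 0 = 1" and Xd: "\<forall>m j. below_ppow p (d i) j \<longrightarrow> (\<delta> i ^^ m) (X j) = (if m \<le> j then X (j - m) else 0)"
    using sx unfolding slice_ok_def by blast+
  have bk: "below_ppow p (d i) (p ^ k)" using below_pk[OF prime char ders comm] k by simp
  have Jb: "\<And>j. j \<in> J \<Longrightarrow> below_ppow p (d i) j \<and> 1 \<le> j" using Jc(3) unfolding jset_def by blast
  have adelta: "b \<in> Adelta n \<delta>"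
    unfolding Adelta_def
  proof (intro CollectI allI impI)
    fix l assume l: "l < n"
    show "\<delta> l b = 0"
    proof (cases "l = i")
      case True thus ?thesis using lc(1) unfolding kerD_def by simp
    next
      case False
      have Dl: "is_derivation (\<delta> l)" using ders l by simp
      have cli: "\<delta> l \<circ> \<delta> i = \<delta> i \<circ> \<delta> l" using comm l i by simp
      have kv: "\<delta> l v = 0" using sy l False bk unfolding slice_ok_def v_def by blast
      have kX: "\<And>j. j \<in> J \<Longrightarrow> \<delta> l (X j) = 0" using sx l False Jb unfolding slice_ok_def by blast
      have ker_l: "\<And>a. a \<in> kerD (\<delta> i) \<Longrightarrow> \<delta> l a \<in> kerD (\<delta> i)"
      proof -
        fix a assume "a \<in> kerD (\<delta> i)"
        hence "\<delta> i a = 0" unfolding kerD_def by simp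
        hence "\<delta> i (\<delta> l a) = 0" using fun_cong[OF cli, of a] der_0[OF Dl] by simp
        thus "\<delta> l a \<in> kerD (\<delta> i)" unfolding kerD_def by simp
      qed
      have "\<delta> l (v - b) = (\<Sum>j\<in>J. \<delta> l (c j * X j))" unfolding Jc(1) by (rule der_sum[OF Dl])
      also have "\<dots> = (\<Sum>j\<in>J. \<delta> l (c j) * X j)"
        by (rule sum.cong[OF refl]) (simp add: der_mult[OF Dl] kX mult.commute)
      finally have e: "- \<delta> l b = (\<Sum>j\<in>J. \<delta> l (c j) * X j)" using kv der_diff[OF Dl, of v b] by simp
      have m: "- \<delta> l b \<in> mset1 p (\<delta> i) (d i) X"
        unfolding e mset1_def using Jc ker_l by (intro CollectI exI[of _ J] exI[of _ "\<lambda>j. \<delta> l (c j)"]) auto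
      have kk: "- \<delta> l b \<in> kerD (\<delta> i)" using ker_l[OF lc(1)] unfolding kerD_def by (simp add: der_minus[OF Di])
      have "- \<delta> l b = 0" by (rule ker_mset1[OF prime char Di X0 Xd kk m])
      thus ?thesis by simp
    qed
  qed
  have pw: "b ^ p = 0"
  proof -
    have "v ^ p = 0" unfolding v_def
    proof (rule iter1_pow_p[OF prime char, of "d i" "\<lambda>j. y (mvec i j)" "p ^ k"])
      show "iter1 p (d i) (\<lambda>j. y (mvec i j))" using sy unfolding slice_ok_def by blast
      show "1 \<le> p ^ k" using p0[OF prime char ders comm] by simp
      show "below_ppow p (d i) (p ^ k)" by (rule bk)
    qed
    moreover have "(v - b) ^ p = 0"
    proof -
      have "(v - b) ^ p = (\<Sum>j\<in>J. (c j * X j) ^ p)" unfolding Jc(1) by (rule frob_sum[OF prime char])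
      also have "\<dots> = (\<Sum>j\<in>J. 0)"
      proof (rule sum.cong[OF refl])
        fix j assume j: "j \<in> J"
        have "X j ^ p = 0"
        proof (rule iter1_pow_p[OF prime char, of "d i" X j])
          show "iter1 p (d i) X" using sx unfolding slice_ok_def by blast
        qed (use Jb[OF j] in auto)
        thus "(c j * X j) ^ p = 0" by (simp add: power_mult_distrib)
      qed
      finally show ?thesis by simp
    qed
    moreover have "v ^ p = b ^ p + (v - b) ^ p" using frob_add[OF prime char, of b "v - b"] by simp
    ultimately show ?thesis by simp
  qed
  show ?thesis using adelta pw unfolding b_def by simp
qed

lemma rmap_Cset:
  assumes x': "x' \<in> iter_descents p n \<delta> d" and y: "y \<in> iter_descents p n \<delta> d"
  shows "rmap p n \<delta> d x' y \<in> Cset p n \<delta> d"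
proof -
  have "\<forall>ij\<in>Kset n d. rmap p n \<delta> d x' y ij \<in> Adelta n \<delta> \<and> rmap p n \<delta> d x' y ij ^ p = 0"
  proof
    fix ij assume ij: "ij \<in> Kset n d"
    then obtain i k where ik: "ij = (i, k)" "i < n" "enat k < d i" unfolding Kset_def by blast
    have "rmap p n \<delta> d x' y ij = lam p \<delta> d x' i k y" unfolding rmap_def using ij ik by simp
    thus "rmap p n \<delta> d x' y ij \<in> Adelta n \<delta> \<and> rmap p n \<delta> d x' y ij ^ p = 0"
      using lam_Cset[OF x' y ik(2,3)] by simp
  qed
  moreover have "rmap p n \<delta> d x' y \<in> extensional (Kset n d)" unfolding rmap_def by simp
  ultimately show ?thesis unfolding Cset_def by blast
qed

lemma slices_eq:
  assumes x': "x' \<in> iter_descents p n \<delta> d" and y: "y \<in> iter_descents p n \<delta> d"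
    and y': "y' \<in> iter_descents p n \<delta> d"
    and lameq: "\<forall>k. enat k < d i \<longrightarrow> lam p \<delta> d x' i k y = lam p \<delta> d x' i k y'"
    and i: "i < n"
  shows "below_ppow p (d i) j \<Longrightarrow> y (mvec i j) = y' (mvec i j)"
proof (induction j rule: less_induct)
  case (less j)
  define X where "X = (\<lambda>j. x' (mvec i j))"
  have Di: "is_derivation (\<delta> i)" using ders i by simp
  have sx: "slice_ok p n \<delta> d i X" unfolding X_def by (rule slice_ok_desc[OF prime char ders comm x' i])
  have sy: "slice_ok p n \<delta> d i (\<lambda>j. y (mvec i j))" by (rule slice_ok_desc[OF prime char ders comm y i])
  have sy': "slice_ok p n \<delta> d i (\<lambda>j. y' (mvec i j))" by (rule slice_ok_desc[OF prime char ders comm y' i])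
  have X0: "X 0 = 1" and Xd: "\<forall>m j. below_ppow p (d i) j \<longrightarrow> (\<delta> i ^^ m) (X j) = (if m \<le> j then X (j - m) else 0)"
    using sx unfolding slice_ok_def by blast+
  have Y0: "y (mvec i 0) = 1" "y' (mvec i 0) = 1" using sy sy' unfolding slice_ok_def by blast+
  have Yd: "\<forall>m j. below_ppow p (d i) j \<longrightarrow> (\<delta> i ^^ m) (y (mvec i j)) = (if m \<le> j then y (mvec i (j - m)) else 0)"
    using sy unfolding slice_ok_def by blast
  have Yd': "\<forall>m j. below_ppow p (d i) j \<longrightarrow> (\<delta> i ^^ m) (y' (mvec i j)) = (if m \<le> j then y' (mvec i (j - m)) else 0)"
    using sy' unfolding slice_ok_def by blast
  have Yi: "iter1 p (d i) (\<lambda>j. y (mvec i j))" using sy unfolding slice_ok_def by blast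
  have Yi': "iter1 p (d i) (\<lambda>j. y' (mvec i j))" using sy' unfolding slice_ok_def by blast
  show ?case
  proof (cases "j = 0")
    case True thus ?thesis using Y0 by simp
  next
    case j0: False
    show ?thesis
    proof (cases "\<exists>k. j = p ^ k")
      case True
      then obtain k where jk: "j = p ^ k" by blast
      have k: "enat k < d i" using below_pk[OF prime char ders comm] less.prems jk by simp
      define lm where "lm = lam p \<delta> d x' i k y"
      have l1: "y (mvec i j) - lm \<in> mset1 p (\<delta> i) (d i) X"
        using lam_char[OF prime char ders comm x' y i k] jk unfolding lm_def X_def by simp
      have l2: "y' (mvec i j) - lm \<in> mset1 p (\<delta> i) (d i) X"
        using lam_char[OF prime char ders comm x' y' i k] jk lameq k unfolding lm_def X_def by simp
      have m: "y (mvec i j) - y' (mvec i j) \<in> mset1 p (\<delta> i) (d i) X"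
        using mset1_diff[OF prime char Di X0 Xd l1 l2] by simp
      have bj1: "below_ppow p (d i) (j - 1)" using less.prems by (rule below_mono') simp
      have "\<delta> i (y (mvec i j)) = y (mvec i (j - 1))" using Yd less.prems j0 spec[OF Yd, of 1] by simp
      moreover have "\<delta> i (y' (mvec i j)) = y' (mvec i (j - 1))" using Yd' less.prems j0 spec[OF Yd', of 1] by simp
      moreover have "y (mvec i (j - 1)) = y' (mvec i (j - 1))" using less.IH[of "j - 1"] bj1 j0 by simp
      ultimately have k0: "y (mvec i j) - y' (mvec i j) \<in> kerD (\<delta> i)"
        unfolding kerD_def by (simp add: der_diff[OF Di])
      have "y (mvec i j) - y' (mvec i j) = 0" by (rule ker_mset1[OF prime char Di X0 Xd k0 m])
      thus ?thesis by simp
    next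
      case False
      obtain v q where vq: "j = p ^ v * q" "\<not> p dvd q" using ppow_decomp[OF prime, of j] j0 by auto
      have q0: "q \<noteq> 0" using vq j0 by auto
      have q1: "q \<noteq> 1" using vq False by auto
      define a where "a = p ^ v"
      define b where "b = p ^ v * (q - 1)"
      have ab: "a + b = j" unfolding a_def b_def using vq q0 by (cases q) (simp_all add: algebra_simps)
      have a1: "a \<ge> 1" "b \<ge> 1" unfolding a_def b_def using p0[OF prime char ders comm] q0 q1 by auto
      have alt: "a < j" "b < j" using ab a1 by auto
      have ba: "below_ppow p (d i) a" "below_ppow p (d i) b" using less.prems ab by (auto intro: below_mono')
      have e1: "y (mvec i a) * y (mvec i b) = of_nat (j choose a) * y (mvec i j)"
        using Yi ba less.prems ab unfolding iter1_def by auto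
      have e2: "y' (mvec i a) * y' (mvec i b) = of_nat (j choose a) * y' (mvec i j)"
        using Yi' ba less.prems ab unfolding iter1_def by auto
      have ih: "y (mvec i a) = y' (mvec i a)" "y (mvec i b) = y' (mvec i b)"
        using less.IH alt ba by auto
      have eq: "(of_nat (j choose a) :: 'a) * y (mvec i j) = of_nat (j choose a) * y' (mvec i j)"
        using e1 e2 ih by simp
      have "[j choose a = q] (mod p)" unfolding vq(1) a_def by (rule choose_qP_P[OF prime])
      hence "\<not> p dvd (j choose a)" using vq(2) by (metis cong_dvd_iff)
      hence inv: "(fp_inv p (j choose a) :: 'a) * of_nat (j choose a) = 1" by (rule fp_inv_mult[OF prime char])
      have "y (mvec i j) = fp_inv p (j choose a) * (of_nat (j choose a) * y (mvec i j))"
        using inv by (simp add: mult.assoc[symmetric])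
      also have "\<dots> = fp_inv p (j choose a) * (of_nat (j choose a) * y' (mvec i j))" using eq by simp
      also have "\<dots> = y' (mvec i j)" using inv by (simp add: mult.assoc[symmetric])
      finally show ?thesis .
    qed
  qed
qed

lemma rmap_inj:
  assumes x': "x' \<in> iter_descents p n \<delta> d"
  shows "inj_on (rmap p n \<delta> d x') (iter_descents p n \<delta> d)"
proof (rule inj_onI)
  fix y y' assume y: "y \<in> iter_descents p n \<delta> d" and y': "y' \<in> iter_descents p n \<delta> d"
    and eq: "rmap p n \<delta> d x' y = rmap p n \<delta> d x' y'"
  have lameq: "\<forall>k. enat k < d i \<longrightarrow> lam p \<delta> d x' i k y = lam p \<delta> d x' i k y'" if i: "i < n" for i
  proof (intro allI impI)
    fix k assume k: "enat k < d i"
    have "(i, k) \<in> Kset n d" unfolding Kset_def using i k by simp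
    thus "lam p \<delta> d x' i k y = lam p \<delta> d x' i k y'" using fun_cong[OF eq, of "(i, k)"] unfolding rmap_def by simp
  qed
  show "y = y'"
  proof (rule ext)
    fix \<alpha>
    show "y \<alpha> = y' \<alpha>"
    proof (cases "\<alpha> \<in> idx_set p n d")
      case True
      have "y \<alpha> = (\<Prod>i<n. y (mvec i (\<alpha> i)))" by (rule prod_decomp[OF prime char ders comm y True])
      also have "\<dots> = (\<Prod>i<n. y' (mvec i (\<alpha> i)))"
      proof (rule prod.cong[OF refl])
        fix i assume "i \<in> {..<n}"
        hence i: "i < n" by simp
        have "below_ppow p (d i) (\<alpha> i)" using True i unfolding idx_set_def by blast
        thus "y (mvec i (\<alpha> i)) = y' (mvec i (\<alpha> i))" by (rule slices_eq[OF x' y y' lameq[OF i] i])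
      qed
      also have "\<dots> = y' \<alpha>" by (rule prod_decomp[OF prime char ders comm y' True, symmetric])
      finally show ?thesis .
    next
      case False
      have "y \<in> extensional (idx_set p n d)" "y' \<in> extensional (idx_set p n d)"
        using y y' unfolding iter_descents_def by auto
      thus ?thesis using False extensional_arb by metis
    qed
  qed
qed

end

lemma desc_from_step:
  assumes D: "is_derivation D" and Y0: "Y 0 = 1"
    and st: "\<And>i. 1 \<le> i \<Longrightarrow> i \<le> j \<Longrightarrow> D (Y i) = Y (i - 1)"
  shows "(D ^^ m) (Y j) = (if m \<le> j then Y (j - m) else 0)"
proof (induction m)
  case 0 thus ?case by simp
next
  case (Suc m)
  show ?case
  proof (cases "m \<le> j")
    case False thus ?thesis using Suc by (simp add: der_0[OF D])
  next
    case True
    show ?thesis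
    proof (cases "m = j")
      case True thus ?thesis using Suc Y0 by (simp add: der_1[OF D])
    next
      case False
      hence "D (Y (j - m)) = Y (j - m - 1)" using True by (intro st) auto
      thus ?thesis using Suc True False by simp
    qed
  qed
qed

context
  fixes p :: nat and D :: "'a::comm_ring_1 \<Rightarrow> 'a" and e :: enat and X L :: "nat \<Rightarrow> 'a"
  assumes prime: "prime p" and char: "of_nat p = (0::'a)" and der: "is_derivation D"
    and X0: "X 0 = 1"
    and Xd: "\<forall>m j. below_ppow p e j \<longrightarrow> (D ^^ m) (X j) = (if m \<le> j then X (j - m) else 0)"
    and Xi: "iter1 p e X"
    and L0: "L 0 = 1" and Li: "iter1 p e L" and Lk: "\<forall>l. below_ppow p e l \<longrightarrow> D (L l) = 0"
begin

definition conv :: "nat \<Rightarrow> 'a" where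
  "conv m = (\<Sum>l\<le>m. X (m - l) * L l)"

lemma conv_0: "conv 0 = 1"
  unfolding conv_def using X0 L0 by simp

lemma conv_step:
  assumes m: "below_ppow p e m" "1 \<le> m"
  shows "D (conv m) = conv (m - 1)"
proof -
  obtain m' where m': "m = Suc m'" using m(2) by (cases m) auto
  have bl: "\<And>l. l \<le> m \<Longrightarrow> below_ppow p e l" using m(1) below_mono' by blast
  have DX: "\<And>l. l \<le> m \<Longrightarrow> D (X (m - l)) = (if l < m then X (m - l - 1) else 0)"
  proof -
    fix l assume l: "l \<le> m"
    have bml: "below_ppow p e (m - l)" using below_mono'[OF m(1), of "m - l"] by simp
    have "(D ^^ 1) (X (m - l)) = (if 1 \<le> m - l then X (m - l - 1) else 0)"
      using Xd bml by blast
    hence "D (X (m - l)) = (if 1 \<le> m - l then X (m - l - 1) else 0)" by simp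
    thus "D (X (m - l)) = (if l < m then X (m - l - 1) else 0)" using l by (cases "l < m") auto
  qed
  have "D (conv m) = (\<Sum>l\<le>m. D (X (m - l) * L l))" unfolding conv_def by (rule der_sum[OF der])
  also have "\<dots> = (\<Sum>l\<le>m. (if l < m then X (m - l - 1) * L l else 0))"
  proof (rule sum.cong[OF refl])
    fix l assume "l \<in> {..m}"
    hence l: "l \<le> m" by simp
    have "D (L l) = 0" using Lk bl[OF l] by blast
    thus "D (X (m - l) * L l) = (if l < m then X (m - l - 1) * L l else 0)"
      using DX[OF l] by (simp add: der_mult[OF der] mult.commute)
  qed
  also have "\<dots> = (\<Sum>l\<le>m'. X (m' - l) * L l)"
    unfolding m' by (simp add: sum.atMost_Suc)
  finally show ?thesis unfolding conv_def m' by simp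
qed

lemma conv_desc:
  assumes "below_ppow p e j"
  shows "(D ^^ m) (conv j) = (if m \<le> j then conv (j - m) else 0)"
  by (rule desc_from_step[of D conv, OF der conv_0]) (use assms below_mono' conv_step in blast)

lemma conv_iter: "iter1 p e conv"
  unfolding iter1_def
proof (intro allI impI)
  fix a b assume a: "below_ppow p e a" and b: "below_ppow p e b"
  define A where "A = a + b"
  define H where "H = (\<lambda>l LL. if below_ppow p e (A - LL) \<and> below_ppow p e LL
      then (of_nat (((A - LL) choose (a - l)) * (LL choose l)) :: 'a) * (X (A - LL) * L LL) else 0)"
  have T: "X (a - l) * L l * (X (b - l') * L l') = H l (l + l')" if l: "l \<le> a" "l' \<le> b" for l l'
  proof -
    have b1: "below_ppow p e (a - l)" "below_ppow p e (b - l')" "below_ppow p e l" "below_ppow p e l'"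
      using a b l by (auto intro: below_mono')
    have e1: "(a - l) + (b - l') = A - (l + l')" unfolding A_def using l by simp
    have xx: "X (a - l) * X (b - l') = (if below_ppow p e (A - (l + l')) then of_nat ((A - (l + l')) choose (a - l)) * X (A - (l + l')) else 0)"
      using Xi b1 unfolding iter1_def e1[symmetric] by blast
    have ll: "L l * L l' = (if below_ppow p e (l + l') then of_nat ((l + l') choose l) * L (l + l') else 0)"
      using Li b1 unfolding iter1_def by blast
    have "X (a - l) * L l * (X (b - l') * L l') = (X (a - l) * X (b - l')) * (L l * L l')"
      by (simp only: ac_simps)
    also have "\<dots> = H l (l + l')" unfolding xx ll H_def by (simp add: ac_simps)
    finally show ?thesis .
  qed
  have "conv a * conv b = (\<Sum>l\<le>a. \<Sum>l'\<le>b. X (a - l) * L l * (X (b - l') * L l'))"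
    unfolding conv_def by (rule sum_product)
  also have "\<dots> = (\<Sum>l\<le>a. \<Sum>l'\<le>b. H l (l + l'))"
    by (intro sum.cong refl T) auto
  also have "\<dots> = (\<Sum>l\<le>a. \<Sum>LL\<le>A. H l LL)"
  proof (rule sum.cong[OF refl])
    fix l assume "l \<in> {..a}"
    hence l: "l \<le> a" by simp
    have "(\<Sum>l'\<le>b. H l (l + l')) = (\<Sum>LL\<in>{0 + l..b + l}. H l LL)"
      unfolding sum.shift_bounds_cl_nat_ivl by (simp add: atMost_atLeast0 add.commute)
    also have "\<dots> = (\<Sum>LL\<le>A. H l LL)"
    proof (rule sum.mono_neutral_left)
      show "finite {..A}" by simp
      show "{0 + l..b + l} \<subseteq> {..A}" unfolding A_def using l by auto
      show "\<forall>i\<in>{..A} - {0 + l..b + l}. H l i = 0"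
      proof
        fix LL assume LL: "LL \<in> {..A} - {0 + l..b + l}"
        show "H l LL = 0"
        proof (cases "LL < l")
          case True thus ?thesis unfolding H_def by (simp add: binomial_eq_0)
        next
          case False
          hence "LL > b + l" using LL by auto
          moreover have "LL \<le> A" using LL by simp
          ultimately have "A - LL < a - l" unfolding A_def by arith
          thus ?thesis unfolding H_def by (simp add: binomial_eq_0)
        qed
      qed
    qed
    finally show "(\<Sum>l'\<le>b. H l (l + l')) = (\<Sum>LL\<le>A. H l LL)" .
  qed
  also have "\<dots> = (\<Sum>LL\<le>A. \<Sum>l\<le>a. H l LL)" by (rule sum.swap)
  also have "\<dots> = (\<Sum>LL\<le>A. if below_ppow p e (A - LL) \<and> below_ppow p e LL
      then of_nat (A choose a) * (X (A - LL) * L LL) else 0)"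
  proof (rule sum.cong[OF refl])
    fix LL assume "LL \<in> {..A}"
    hence LA: "LL \<le> A" by simp
    have v: "(\<Sum>l\<le>a. ((A - LL) choose (a - l)) * (LL choose l)) = A choose a"
      using vandermonde[of LL "A - LL" a] LA by (simp add: mult.commute)
    show "(\<Sum>l\<le>a. H l LL) = (if below_ppow p e (A - LL) \<and> below_ppow p e LL
      then of_nat (A choose a) * (X (A - LL) * L LL) else 0)"
    proof (cases "below_ppow p e (A - LL) \<and> below_ppow p e LL")
      case True
      have "(\<Sum>l\<le>a. H l LL) = (\<Sum>l\<le>a. (of_nat (((A - LL) choose (a - l)) * (LL choose l)) :: 'a)) * (X (A - LL) * L LL)"
        unfolding H_def using True by (simp add: sum_distrib_right)
      also have "(\<Sum>l\<le>a. (of_nat (((A - LL) choose (a - l)) * (LL choose l)) :: 'a)) = of_nat (A choose a)"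
        unfolding of_nat_sum[symmetric] v ..
      finally show ?thesis using True by simp
    next
      case False
      have "(\<Sum>l\<le>a. H l LL) = (\<Sum>l\<le>a. 0)" unfolding H_def by (rule sum.cong[OF refl]) (simp only: if_not_P[OF False])
      thus ?thesis by (simp only: if_not_P[OF False] sum.neutral_const)
    qed
  qed
  also have "\<dots> = (if below_ppow p e A then of_nat (A choose a) * conv A else 0)"
  proof (cases "below_ppow p e A")
    case True
    have "(\<Sum>LL\<le>A. if below_ppow p e (A - LL) \<and> below_ppow p e LL
      then of_nat (A choose a) * (X (A - LL) * L LL) else 0) = (\<Sum>LL\<le>A. of_nat (A choose a) * (X (A - LL) * L LL))"
      by (rule sum.cong[OF refl]) (use True below_mono' in auto)
    also have "\<dots> = of_nat (A choose a) * conv A" unfolding conv_def by (simp add: sum_distrib_left)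
    finally show ?thesis using True by simp
  next
    case False
    have "p dvd (A choose a)" unfolding A_def by (rule below_overflow_dvd[OF prime char a b]) (use False A_def in simp)
    hence z: "(of_nat (A choose a) :: 'a) = 0" by (rule ofnat_choose_zero[OF prime char])
    have "(\<Sum>LL\<le>A. if below_ppow p e (A - LL) \<and> below_ppow p e LL
      then of_nat (A choose a) * (X (A - LL) * L LL) else 0) = (\<Sum>LL\<le>A. (0::'a))"
      by (rule sum.cong[OF refl]) (simp add: z)
    thus ?thesis using False by simp
  qed
  finally show "conv a * conv b = (if below_ppow p e (a + b) then of_nat ((a + b) choose a) * conv (a + b) else 0)"
    unfolding A_def .
qed

lemma conv_kill:
  assumes D': "is_derivation D'" and kX: "\<forall>j. below_ppow p e j \<longrightarrow> D' (X j) = 0"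
    and kL: "\<forall>j. below_ppow p e j \<longrightarrow> D' (L j) = 0" and m: "below_ppow p e m"
  shows "D' (conv m) = 0"
  unfolding conv_def
proof (rule der_sum_zero[OF D'], rule ballI)
  fix l assume "l \<in> {..m}"
  hence "below_ppow p e (m - l)" "below_ppow p e l" using m below_mono' by auto
  thus "D' (X (m - l) * L l) = 0" using kX kL der_mult_zero[OF D'] by blast
qed

lemma conv_mset:
  assumes k: "below_ppow p e (p ^ k)"
  shows "conv (p ^ k) - L (p ^ k) \<in> mset1 p D e X"
proof -
  define P where "P = p ^ k"
  have "conv P = (\<Sum>l<Suc P. X (P - l) * L l)" unfolding conv_def by (simp only: lessThan_Suc_atMost)
  also have "\<dots> = (\<Sum>l<P. X (P - l) * L l) + X (P - P) * L P" by (rule sum.lessThan_Suc)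
  finally have "conv P = (\<Sum>l<P. X (P - l) * L l) + X (P - P) * L P" .
  hence e1: "conv P - L P = (\<Sum>l<P. L l * X (P - l))" using X0 by (simp add: mult.commute)
  define f where "f = (\<lambda>l. P - l)"
  have inj: "inj_on f {..<P}" unfolding f_def by (rule inj_onI) auto
  have "(\<Sum>j\<in>f ` {..<P}. L (P - j) * X j) = (\<Sum>l<P. L (P - f l) * X (f l))"
    using sum.reindex[OF inj, of "\<lambda>j. L (P - j) * X j"] by (simp add: comp_def)
  also have "\<dots> = (\<Sum>l<P. L l * X (P - l))" unfolding f_def by (rule sum.cong) auto
  finally have e2: "conv P - L P = (\<Sum>j\<in>f ` {..<P}. L (P - j) * X j)" using e1 by simp
  have J: "f ` {..<P} \<subseteq> jset p e"
    unfolding f_def jset_def using k P_def below_mono' by auto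
  have c: "\<forall>j\<in>f ` {..<P}. L (P - j) \<in> kerD D"
    unfolding kerD_def using Lk k P_def below_mono' by auto
  show ?thesis unfolding mset1_def P_def[symmetric] e2
    using J c by (intro CollectI exI[of _ "f ` {..<P}"] exI[of _ "\<lambda>j. L (P - j)"]) auto
qed

end

lemma kill_dprod:
  assumes prime: "prime p" and char: "of_nat p = (0::'a::comm_ring_1)"
    and D': "is_derivation (D' :: 'a \<Rightarrow> 'a)"
    and ku: "\<forall>k. enat k < e \<longrightarrow> D' (uu k) = 0" and j: "below_ppow p e j"
  shows "D' (dprod p uu j) = 0"
  unfolding dprod_def
proof (rule der_prod_zero[OF D'], intro ballI)
  fix k assume k: "k \<in> {..j}"
  show "D' (fac p uu j k) = 0"
  proof (cases "j div p ^ k mod p = 0")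
    case True thus ?thesis using fac_zero[OF prime char] der_1[OF D'] by simp
  next
    case False
    hence "j div p ^ k \<noteq> 0" by (intro notI) simp
    hence pk: "p ^ k \<le> j" using div_eq_0_iff p_gt0[OF prime char] by (metis not_le power_eq_0_iff)
    have "enat k < e"
    proof (cases e)
      case (enat M)
      hence "j < p ^ M" using j by (simp add: below_ppow_def)
      hence "p ^ k < p ^ M" using pk by simp
      hence "k < M" using p_gt1[OF prime char] by (simp add: power_strict_increasing_iff)
      thus ?thesis using enat by simp
    qed simp
    hence "D' (uu k) = 0" using ku by blast
    moreover have "D' (fp_inv p m) = 0" for m unfolding fp_inv_def by (rule der_of_nat[OF D'])
    ultimately show ?thesis unfolding fac_def by (simp add: der_mult_zero[OF D'] der_power_zero[OF D'])
  qed
qed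

lemma dprod_0:
  assumes prime: "prime p" and char: "of_nat p = (0::'a::comm_ring_1)"
  shows "dprod p (uu :: nat \<Rightarrow> 'a) 0 = 1"
proof -
  have "dprod p uu 0 = dpr p 0 uu 0" by (rule dprod_eq_dpr[OF prime char]) simp
  thus ?thesis by (simp add: dpr_def)
qed

lemma dprod_pk:
  assumes prime: "prime p" and char: "of_nat p = (0::'a::comm_ring_1)"
  shows "dprod p (uu :: nat \<Rightarrow> 'a) (p ^ k) = uu k"
proof -
  have lt: "p ^ k < p ^ Suc k" using p_gt1[OF prime char] by simp
  have "dprod p uu (p ^ k) = dpr p (Suc k) uu (p ^ k)" by (rule dprod_eq_dpr[OF prime char lt])
  also have "\<dots> = dpr p k uu (p ^ k mod p ^ k) * (uu k ^ (p ^ k div p ^ k) * fp_inv p (fact (p ^ k div p ^ k)))"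
    by (rule dpr_Suc[OF prime char lt])
  also have "\<dots> = uu k" using p_gt0[OF prime char] dpr_0[OF prime char] fp_inv_1[OF prime char] by simp
  finally show ?thesis .
qed

context
  fixes p n :: nat and \<delta> :: "nat \<Rightarrow> 'a::comm_ring_1 \<Rightarrow> 'a" and d :: "nat \<Rightarrow> enat"
  assumes prime: "prime p" and char: "of_nat p = (0::'a)"
    and ders: "\<forall>i<n. is_derivation (\<delta> i)"
    and comm: "\<forall>i<n. \<forall>j<n. \<delta> i \<circ> \<delta> j = \<delta> j \<circ> \<delta> i"
begin

lemma rmap_surj:
  assumes x': "x' \<in> iter_descents p n \<delta> d" and c: "c \<in> Cset p n \<delta> d"
  shows "\<exists>y\<in>iter_descents p n \<delta> d. rmap p n \<delta> d x' y = c"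
proof -
  have cK: "c (i, k) \<in> Adelta n \<delta> \<and> c (i, k) ^ p = 0" if "i < n" "enat k < d i" for i k
    using c that unfolding Cset_def Kset_def by blast
  have cE: "c \<in> extensional (Kset n d)" using c unfolding Cset_def by blast
  define Lm where "Lm = (\<lambda>i. dprod p (\<lambda>k. c (i, k)))"
  define X where "X = (\<lambda>i j. x' (mvec i j))"
  define Y where "Y = (\<lambda>i. conv (X i) (Lm i))"
  have props: "slice_ok p n \<delta> d i (X i) \<and> Lm i 0 = 1 \<and> iter1 p (d i) (Lm i) \<and>
      (\<forall>l<n. \<forall>j. below_ppow p (d i) j \<longrightarrow> \<delta> l (Lm i j) = 0)" if i: "i < n" for i
  proof (intro conjI allI impI)
    show "slice_ok p n \<delta> d i (X i)" unfolding X_def by (rule slice_ok_desc[OF prime char ders comm x' i])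
    show "Lm i 0 = 1" unfolding Lm_def by (rule dprod_0[OF prime char])
    show "iter1 p (d i) (Lm i)" unfolding Lm_def by (rule iter1_dprod[OF prime char]) (use cK i in blast)
    fix l j assume l: "l < n" and j: "below_ppow p (d i) j"
    show "\<delta> l (Lm i j) = 0" unfolding Lm_def
    proof (rule kill_dprod[OF prime char _ _ j])
      show "is_derivation (\<delta> l)" using ders l by simp
      show "\<forall>k. enat k < d i \<longrightarrow> \<delta> l (c (i, k)) = 0" using cK i l unfolding Adelta_def by blast
    qed
  qed
  have sY: "slice_ok p n \<delta> d i (Y i)" if i: "i < n" for i
  proof -
    have Di: "is_derivation (\<delta> i)" using ders i by simp
    have sx: "slice_ok p n \<delta> d i (X i)" and L0: "Lm i 0 = 1" and Li: "iter1 p (d i) (Lm i)"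
      and Lk: "\<forall>l<n. \<forall>j. below_ppow p (d i) j \<longrightarrow> \<delta> l (Lm i j) = 0"
      using props[OF i] by auto
    have X0: "X i 0 = 1" and Xd: "\<forall>m j. below_ppow p (d i) j \<longrightarrow> (\<delta> i ^^ m) (X i j) = (if m \<le> j then X i (j - m) else 0)"
      and Xi: "iter1 p (d i) (X i)"
      and Xk: "\<forall>l<n. l \<noteq> i \<longrightarrow> (\<forall>j. below_ppow p (d i) j \<longrightarrow> \<delta> l (X i j) = 0)"
      using sx unfolding slice_ok_def by blast+
    have Lki: "\<forall>l. below_ppow p (d i) l \<longrightarrow> \<delta> i (Lm i l) = 0" using Lk i by blast
    note cv = prime char Di X0 Xd Xi L0 Li Lki
    show ?thesis unfolding slice_ok_def Y_def
    proof (intro conjI allI impI)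
      show "conv (X i) (Lm i) 0 = 1" by (rule conv_0[OF cv])
      show "iter1 p (d i) (conv (X i) (Lm i))" by (rule conv_iter[OF cv])
    next
      fix m j assume "below_ppow p (d i) j"
      thus "(\<delta> i ^^ m) (conv (X i) (Lm i) j) = (if m \<le> j then conv (X i) (Lm i) (j - m) else 0)"
        by (rule conv_desc[OF cv])
    next
      fix l j assume l: "l < n" "l \<noteq> i" and j: "below_ppow p (d i) j"
      show "\<delta> l (conv (X i) (Lm i) j) = 0"
      proof (rule conv_kill[OF cv _ _ _ j])
        show "is_derivation (\<delta> l)" using ders l by simp
        show "\<forall>j. below_ppow p (d i) j \<longrightarrow> \<delta> l (X i j) = 0" using Xk l by blast
        show "\<forall>j. below_ppow p (d i) j \<longrightarrow> \<delta> l (Lm i j) = 0" using Lk l by blast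
      qed
    qed
  qed
  define y where "y = restrict (\<lambda>\<alpha>. \<Prod>i<n. Y i (\<alpha> i)) (idx_set p n d)"
  have yD: "y \<in> iter_descents p n \<delta> d" unfolding y_def
    by (rule prod_descent[OF prime char ders comm]) (use sY in blast)
  have "rmap p n \<delta> d x' y = c"
  proof (rule ext)
    fix ij
    show "rmap p n \<delta> d x' y ij = c ij"
    proof (cases "ij \<in> Kset n d")
      case False
      thus ?thesis unfolding rmap_def using cE extensional_arb[OF cE False] by simp
    next
      case True
      then obtain i k where ik: "ij = (i, k)" "i < n" "enat k < d i" unfolding Kset_def by blast
      have Di: "is_derivation (\<delta> i)" using ders ik by simp
      have sx: "slice_ok p n \<delta> d i (X i)" and L0: "Lm i 0 = 1" and Li: "iter1 p (d i) (Lm i)"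
        and Lk: "\<forall>l<n. \<forall>j. below_ppow p (d i) j \<longrightarrow> \<delta> l (Lm i j) = 0"
        using props[OF ik(2)] by auto
      have X0: "X i 0 = 1" and Xd: "\<forall>m j. below_ppow p (d i) j \<longrightarrow> (\<delta> i ^^ m) (X i j) = (if m \<le> j then X i (j - m) else 0)"
        and Xi: "iter1 p (d i) (X i)"
        using sx unfolding slice_ok_def by blast+
      have Lki: "\<forall>l. below_ppow p (d i) l \<longrightarrow> \<delta> i (Lm i l) = 0" using Lk ik by blast
      note cv = prime char Di X0 Xd Xi L0 Li Lki
      have bk: "below_ppow p (d i) (p ^ k)" using below_pk[OF prime char ders comm] ik by simp
      have mI: "mvec i (p ^ k) \<in> idx_set p n d" using mvec_idx[OF p0[OF prime char ders comm] ik(2)] bk by simp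
      have Y0: "\<And>l. l < n \<Longrightarrow> Y l 0 = 1" using sY unfolding slice_ok_def by blast
      have "y (mvec i (p ^ k)) = (\<Prod>l<n. Y l (mvec i (p ^ k) l))" unfolding y_def using mI by simp
      also have "\<dots> = (\<Prod>l<n. if l = i then Y i (p ^ k) else 1)"
        by (rule prod.cong[OF refl]) (auto simp: mvec_def Y0)
      also have "\<dots> = Y i (p ^ k)" using ik by (simp add: prod.delta)
      finally have yv: "y (mvec i (p ^ k)) = Y i (p ^ k)" .
      have Lpk: "Lm i (p ^ k) = c (i, k)" unfolding Lm_def by (rule dprod_pk[OF prime char])
      have m: "y (mvec i (p ^ k)) - c (i, k) \<in> mset1 p (\<delta> i) (d i) (X i)"
        using conv_mset[OF cv bk] unfolding yv Y_def Lpk .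
      have kc: "c (i, k) \<in> kerD (\<delta> i)" using cK[OF ik(2,3)] ik unfolding Adelta_def kerD_def by blast
      have "lam p \<delta> d x' i k y = c (i, k)"
        unfolding lam_def mset_mset1 using the_comp[OF prime char Di X0 Xd kc m] unfolding X_def .
      thus ?thesis unfolding rmap_def using True ik by simp
    qed
  qed
  thus ?thesis using yD by blast
qed

end

theorem theorem2p10:
  fixes p n :: nat
    and \<delta> :: "nat \<Rightarrow> 'a::comm_ring_1 \<Rightarrow> 'a"
    and d :: "nat \<Rightarrow> enat"
    and y :: "nat \<Rightarrow> nat \<Rightarrow> 'a"
  assumes "prime p"
    and "of_nat p = (0::'a)"
    and "\<forall>i<n. is_derivation (\<delta> i)"
    and "\<forall>i<n. \<forall>j<n. \<delta> i \<circ> \<delta> j = \<delta> j \<circ> \<delta> i"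
    and "\<forall>i<n. \<forall>k. enat k < d i \<longrightarrow>
           y i k ^ p = 0 \<and> (\<delta> i ^^ (p ^ k)) (y i k) = 1 \<and> (\<forall>j<n. j \<noteq> i \<longrightarrow> \<delta> j (y i k) = 0)"
  shows "restrict (\<lambda>\<alpha>. \<Prod>i<n. xseq p (\<delta> i) (y i) (\<alpha> i)) (idx_set p n d) \<in> iter_descents p n \<delta> d
    \<and> (\<forall>x' \<in> iter_descents p n \<delta> d.
         (\<forall>i<n.
            (\<forall>J c. finite J \<and> J \<subseteq> jset p (d i) \<and> (\<forall>j\<in>J. c j \<in> kerD (\<delta> i))
                   \<and> (\<Sum>j\<in>J. c j * x' (mvec i j)) = 0 \<longrightarrow> (\<forall>j\<in>J. c j * x' (mvec i j) = 0))
          \<and> Nset p (\<delta> i) (d i) = {a + m | a m. a \<in> kerD (\<delta> i) \<and> m \<in> mset p (\<delta> i) (d i) x' i}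
          \<and> kerD (\<delta> i) \<inter> mset p (\<delta> i) (d i) x' i = {0})
       \<and> bij_betw (rmap p n \<delta> d x') (iter_descents p n \<delta> d) (Cset p n \<delta> d))
    \<and> ((\<forall>a\<in>Adelta n \<delta>. \<forall>k. a ^ k = 0 \<longrightarrow> a = 0) \<longrightarrow>
         iter_descents p n \<delta> d = {restrict (\<lambda>\<alpha>. \<Prod>i<n. xseq p (\<delta> i) (y i) (\<alpha> i)) (idx_set p n d)})"
proof -
  have prime: "prime p" and char: "of_nat p = (0::'a)" and ders: "\<forall>i<n. is_derivation (\<delta> i)"
    and comm: "\<forall>i<n. \<forall>j<n. \<delta> i \<circ> \<delta> j = \<delta> j \<circ> \<delta> i" using assms(1-4) by auto
  define x where "x = restrict (\<lambda>\<alpha>. \<Prod>i<n. xseq p (\<delta> i) (y i) (\<alpha> i)) (idx_set p n d)"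
  have P1: "x \<in> iter_descents p n \<delta> d" unfolding x_def by (rule part1[OF prime char ders comm assms(5)])
  have P2i: "(\<forall>J c. finite J \<and> J \<subseteq> jset p (d i) \<and> (\<forall>j\<in>J. c j \<in> kerD (\<delta> i))
                   \<and> (\<Sum>j\<in>J. c j * x' (mvec i j)) = 0 \<longrightarrow> (\<forall>j\<in>J. c j * x' (mvec i j) = 0))
          \<and> Nset p (\<delta> i) (d i) = {a + m | a m. a \<in> kerD (\<delta> i) \<and> m \<in> mset p (\<delta> i) (d i) x' i}
          \<and> kerD (\<delta> i) \<inter> mset p (\<delta> i) (d i) x' i = {0}"
    if x': "x' \<in> iter_descents p n \<delta> d" and i: "i < n" for x' i
  proof -
    have Di: "is_derivation (\<delta> i)" using ders i by simp
    have sx: "slice_ok p n \<delta> d i (\<lambda>j. x' (mvec i j))" by (rule slice_ok_desc[OF prime char ders comm x' i])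
    have X0: "x' (mvec i 0) = 1" and Xd: "\<forall>m j. below_ppow p (d i) j \<longrightarrow> (\<delta> i ^^ m) (x' (mvec i j)) = (if m \<le> j then x' (mvec i (j - m)) else 0)"
      using sx unfolding slice_ok_def by blast+
    note cx = prime char Di X0 Xd
    have A: "\<forall>J c. finite J \<and> J \<subseteq> jset p (d i) \<and> (\<forall>j\<in>J. c j \<in> kerD (\<delta> i))
                   \<and> (\<Sum>j\<in>J. c j * x' (mvec i j)) = 0 \<longrightarrow> (\<forall>j\<in>J. c j * x' (mvec i j) = 0)"
    proof (intro allI impI)
      fix J c assume h: "finite J \<and> J \<subseteq> jset p (d i) \<and> (\<forall>j\<in>J. c j \<in> kerD (\<delta> i)) \<and> (\<Sum>j\<in>J. c j * x' (mvec i j)) = 0"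
      have "\<forall>j\<in>J. c j = 0"
      proof (rule indep[OF cx])
        show "finite J" using h by blast
        show "\<forall>j\<in>J. below_ppow p (d i) j" using h unfolding jset_def by blast
        show "\<forall>j\<in>J. \<delta> i (c j) = 0" using h unfolding kerD_def by blast
        show "(\<Sum>j\<in>J. c j * x' (mvec i j)) = 0" using h by blast
      qed
      thus "\<forall>j\<in>J. c j * x' (mvec i j) = 0" by simp
    qed
    have B: "Nset p (\<delta> i) (d i) = {a + m | a m. a \<in> kerD (\<delta> i) \<and> m \<in> mset p (\<delta> i) (d i) x' i}"
      unfolding mset_mset1 by (rule Nset_decomp[OF cx])
    have C: "kerD (\<delta> i) \<inter> mset p (\<delta> i) (d i) x' i = {0}"
    proof
      show "kerD (\<delta> i) \<inter> mset p (\<delta> i) (d i) x' i \<subseteq> {0}"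
        unfolding mset_mset1 using ker_mset1[OF cx] by blast
      show "{0} \<subseteq> kerD (\<delta> i) \<inter> mset p (\<delta> i) (d i) x' i"
        unfolding mset_mset1 using mset1_0[OF cx] der_0[OF Di] unfolding kerD_def by simp
    qed
    show ?thesis by (intro conjI A B C)
  qed
  have P2b: "bij_betw (rmap p n \<delta> d x') (iter_descents p n \<delta> d) (Cset p n \<delta> d)"
    if x': "x' \<in> iter_descents p n \<delta> d" for x'
    unfolding bij_betw_def
  proof
    show "inj_on (rmap p n \<delta> d x') (iter_descents p n \<delta> d)" by (rule rmap_inj[OF prime char ders comm x'])
    show "rmap p n \<delta> d x' ` iter_descents p n \<delta> d = Cset p n \<delta> d"
    proof
      show "rmap p n \<delta> d x' ` iter_descents p n \<delta> d \<subseteq> Cset p n \<delta> d"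
        using rmap_Cset[OF prime char ders comm x'] by blast
      show "Cset p n \<delta> d \<subseteq> rmap p n \<delta> d x' ` iter_descents p n \<delta> d"
        using rmap_surj[OF prime char ders comm x'] by blast
    qed
  qed
  have P3: "iter_descents p n \<delta> d = {x}" if red: "\<forall>a\<in>Adelta n \<delta>. \<forall>k. a ^ k = 0 \<longrightarrow> a = 0"
  proof
    show "{x} \<subseteq> iter_descents p n \<delta> d" using P1 by simp
    have Cz: "cc = restrict (\<lambda>_. 0) (Kset n d)" if cc: "cc \<in> Cset p n \<delta> d" for cc
    proof (rule ext)
      fix ij
      show "cc ij = restrict (\<lambda>_. 0) (Kset n d) ij"
      proof (cases "ij \<in> Kset n d")
        case True
        have ca: "cc ij \<in> Adelta n \<delta>" "cc ij ^ p = 0" using cc True unfolding Cset_def by blast+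
        have "cc ij = 0" by (rule red[rule_format, OF ca(1) ca(2)])
        thus ?thesis using True by simp
      next
        case False
        have "cc \<in> extensional (Kset n d)" using cc unfolding Cset_def by blast
        thus ?thesis using False extensional_arb[of cc "Kset n d" ij] by simp
      qed
    qed
    show "iter_descents p n \<delta> d \<subseteq> {x}"
    proof
      fix z assume z: "z \<in> iter_descents p n \<delta> d"
      have "rmap p n \<delta> d x z = rmap p n \<delta> d x x"
        using Cz[OF rmap_Cset[OF prime char ders comm P1 z]] Cz[OF rmap_Cset[OF prime char ders comm P1 P1]] by simp
      hence "z = x" by (rule inj_onD[OF rmap_inj[OF prime char ders comm P1] _ z P1])
      thus "z \<in> {x}" by simp
    qed
  qed
  show ?thesis
    unfolding x_def[symmetric]
  proof (intro conjI)
    show "x \<in> iter_descents p n \<delta> d" by (rule P1)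
    show "\<forall>x'\<in>iter_descents p n \<delta> d.
       (\<forall>i<n. (\<forall>J c. finite J \<and> J \<subseteq> jset p (d i) \<and> (\<forall>j\<in>J. c j \<in> kerD (\<delta> i)) \<and>
                     (\<Sum>j\<in>J. c j * x' (mvec i j)) = 0 \<longrightarrow>
                     (\<forall>j\<in>J. c j * x' (mvec i j) = 0)) \<and>
              Nset p (\<delta> i) (d i) = {a + m |a m. a \<in> kerD (\<delta> i) \<and> m \<in> mset p (\<delta> i) (d i) x' i} \<and>
              kerD (\<delta> i) \<inter> mset p (\<delta> i) (d i) x' i = {0}) \<and>
       bij_betw (rmap p n \<delta> d x') (iter_descents p n \<delta> d) (Cset p n \<delta> d)"
    proof (rule ballI)
      fix x' assume x': "x' \<in> iter_descents p n \<delta> d"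
      show "(\<forall>i<n. (\<forall>J c. finite J \<and> J \<subseteq> jset p (d i) \<and> (\<forall>j\<in>J. c j \<in> kerD (\<delta> i)) \<and>
                     (\<Sum>j\<in>J. c j * x' (mvec i j)) = 0 \<longrightarrow>
                     (\<forall>j\<in>J. c j * x' (mvec i j) = 0)) \<and>
              Nset p (\<delta> i) (d i) = {a + m |a m. a \<in> kerD (\<delta> i) \<and> m \<in> mset p (\<delta> i) (d i) x' i} \<and>
              kerD (\<delta> i) \<inter> mset p (\<delta> i) (d i) x' i = {0}) \<and>
       bij_betw (rmap p n \<delta> d x') (iter_descents p n \<delta> d) (Cset p n \<delta> d)"
      proof (rule conjI)
        show "bij_betw (rmap p n \<delta> d x') (iter_descents p n \<delta> d) (Cset p n \<delta> d)" by (rule P2b[OF x'])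
      next
        show "\<forall>i<n. (\<forall>J c. finite J \<and> J \<subseteq> jset p (d i) \<and> (\<forall>j\<in>J. c j \<in> kerD (\<delta> i)) \<and>
                     (\<Sum>j\<in>J. c j * x' (mvec i j)) = 0 \<longrightarrow>
                     (\<forall>j\<in>J. c j * x' (mvec i j) = 0)) \<and>
              Nset p (\<delta> i) (d i) = {a + m |a m. a \<in> kerD (\<delta> i) \<and> m \<in> mset p (\<delta> i) (d i) x' i} \<and>
              kerD (\<delta> i) \<inter> mset p (\<delta> i) (d i) x' i = {0}"
        proof (intro allI impI)
          fix i assume "i < n"
          thus "(\<forall>J c. finite J \<and> J \<subseteq> jset p (d i) \<and> (\<forall>j\<in>J. c j \<in> kerD (\<delta> i)) \<and>
                     (\<Sum>j\<in>J. c j * x' (mvec i j)) = 0 \<longrightarrow>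
                     (\<forall>j\<in>J. c j * x' (mvec i j) = 0)) \<and>
              Nset p (\<delta> i) (d i) = {a + m |a m. a \<in> kerD (\<delta> i) \<and> m \<in> mset p (\<delta> i) (d i) x' i} \<and>
              kerD (\<delta> i) \<inter> mset p (\<delta> i) (d i) x' i = {0}" by (rule P2i[OF x'])
        qed
      qed
    qed
    show "(\<forall>a\<in>Adelta n \<delta>. \<forall>k. a ^ k = 0 \<longrightarrow> a = 0) \<longrightarrow> iter_descents p n \<delta> d = {x}"
      using P3 by (intro impI)
  qed
qed

end
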